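(* For $r\ge0$ and $n\ge0$ let \[ h_r(n)=\sum_{\lambda\in\mathcal P_r(n)} a^{(o(\lambda)-o(\delta_r))/2}\,b^{(o(\lambda')-o(\delta_r))/2}\,c^{d(\lambda)-d(\delta_r)}\,d^\lambda(q). \] Then $h(n):=h_r(n)$ does not depend on $r$; it satisfies $h(0)=1$, $h(1)=b+aq^{1/2}$ and, for $n\ge1$, \[ h(n+1)=(b+aq^{1/2})\,h(n)+n\,c(1+q)\,h(n-1); \] and its exponential generating function is \[ \sum_{n\ge0}h(n)\frac{t^n}{n!}=\exp\!\Big((b+aq^{1/2})t+c(1+q)\frac{t^2}{2}\Big). \]
   Context: $a,b,c,q^{1/2}$ are indeterminates. Partitions are identified with Young diagrams; $\lambda'$ is the conjugate. $o(\lambda)$ is the number of odd parts of $\lambda$; $d(\lambda)=\sum_{i=1}^{\lfloor l(\lambda)/2\rfloor}\lfloor\lambda_{2i}/2\rfloor$. A domino is a set of two cells sharing an edge (vertical if in one column). $\delta_r=(r,r-1,\dots,1)$; every partition has a 2-core (obtained by repeatedly removing dominoes while staying a partition) equal to a unique $\delta_r$; $\mathcal P_r(n)$ is the set of partitions with 2-core $\delta_r$ and size $|\delta_r|+2n$. A standard domino tableau of shape $\lambda\in\mathcal P_r(n)$ is a chain $\delta_r=\lambda^0\subset\cdots\subset\lambda^n=\lambda$ with each $\lambda^k/\lambda^{k-1}$ a domino; its spin $sp(D)$ is half the number of vertical dominoes. $d^\lambda(q)=\sum_D q^{sp(D)}$ over all standard domino tableaux of shape $\lambda$. *)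

theory Defs
  imports Complex_Main
begin

definition is_partition :: "nat list \<Rightarrow> bool" where
  "is_partition lam \<longleftrightarrow> sorted_wrt (\<ge>) lam \<and> 0 \<notin> set lam"

text \<open>Young diagram: cell (i,j) = row i, column j (0-indexed).\<close>
definition cells :: "nat list \<Rightarrow> (nat \<times> nat) set" where
  "cells lam = {(i, j). i < length lam \<and> j < lam ! i}"

definition conj_part :: "nat list \<Rightarrow> nat list" where
  "conj_part lam = map (\<lambda>j. card {i. i < length lam \<and> j < lam ! i})
                       [0..<(if lam = [] then 0 else hd lam)]"

definition odd_parts :: "nat list \<Rightarrow> nat" where
  "odd_parts lam = length (filter odd lam)"

text \<open>d(lambda) = sum_{i=1}^{floor(l/2)} floor(lambda_{2i}/2); lambda_{2i} is lam ! (2i-1).\<close>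
definition dstat :: "nat list \<Rightarrow> nat" where
  "dstat lam = (\<Sum>i=1..length lam div 2. (lam ! (2 * i - 1)) div 2)"

definition delta :: "nat \<Rightarrow> nat list" where
  "delta r = rev [1..<r + 1]"

definition vertical_domino :: "(nat \<times> nat) set \<Rightarrow> bool" where
  "vertical_domino D \<longleftrightarrow> (\<exists>i j. D = {(i, j), (Suc i, j)})"

definition horizontal_domino :: "(nat \<times> nat) set \<Rightarrow> bool" where
  "horizontal_domino D \<longleftrightarrow> (\<exists>i j. D = {(i, j), (i, Suc j)})"

definition is_domino :: "(nat \<times> nat) set \<Rightarrow> bool" where
  "is_domino D \<longleftrightarrow> vertical_domino D \<or> horizontal_domino D"

definition dom_step :: "nat list \<Rightarrow> nat list \<Rightarrow> bool" where
  "dom_step mu lam \<longleftrightarrow> is_partition mu \<and> is_partition lam \<and>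
     cells mu \<subseteq> cells lam \<and> is_domino (cells lam - cells mu)"

definition has_two_core :: "nat list \<Rightarrow> nat list \<Rightarrow> bool" where
  "has_two_core lam mu \<longleftrightarrow> is_partition lam \<and> dom_step\<^sup>*\<^sup>* mu lam \<and>
     \<not> (\<exists>nu. dom_step nu mu)"

definition P_set :: "nat \<Rightarrow> nat \<Rightarrow> nat list set" where
  "P_set r n = {lam. is_partition lam \<and> has_two_core lam (delta r) \<and>
                     sum_list lam = sum_list (delta r) + 2 * n}"

text \<open>Standard domino tableaux of shape lam in P_r(n): chains delta r = T!0 ... T!n = lam.\<close>
definition sdt :: "nat \<Rightarrow> nat list \<Rightarrow> nat list list set" where
  "sdt r lam = {T. T \<noteq> [] \<and> hd T = delta r \<and> last T = lam \<and>
                  (\<forall>k < length T - 1. dom_step (T ! k) (T ! Suc k))}"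

definition n_vertical :: "nat list list \<Rightarrow> nat" where
  "n_vertical T = card {k. k < length T - 1 \<and> vertical_domino (cells (T ! Suc k) - cells (T ! k))}"

text \<open>d^lambda(q) with q = s^2 (s stands for q^{1/2}); q^{sp(D)} = s^(number of vertical dominoes).\<close>
definition dpoly :: "complex \<Rightarrow> nat \<Rightarrow> nat list \<Rightarrow> complex" where
  "dpoly s r lam = (\<Sum>T\<in>sdt r lam. s ^ n_vertical T)"

definition hfun :: "complex \<Rightarrow> complex \<Rightarrow> complex \<Rightarrow> complex \<Rightarrow> nat \<Rightarrow> nat \<Rightarrow> complex" where
  "hfun a b c s r n = (\<Sum>lam\<in>P_set r n.
      a powi ((int (odd_parts lam) - int (odd_parts (delta r))) div 2) *
      b powi ((int (odd_parts (conj_part lam)) - int (odd_parts (delta r))) div 2) *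
      c powi (int (dstat lam) - int (dstat (delta r))) *
      dpoly s r lam)"

end

theory Submission
  imports Defs
begin

definition young :: "(nat \<times> nat) set \<Rightarrow> bool" where
  "young S \<longleftrightarrow> finite S \<and> (\<forall>i j i' j'. (i,j) \<in> S \<longrightarrow> i' \<le> i \<longrightarrow> j' \<le> j \<longrightarrow> (i',j') \<in> S)"

definition tr :: "(nat \<times> nat) set \<Rightarrow> (nat \<times> nat) set" where
  "tr S = prod.swap ` S"

definition rowlen :: "(nat \<times> nat) set \<Rightarrow> nat \<Rightarrow> nat" where
  "rowlen S i = card {j. (i,j) \<in> S}"

lemma young_finite: "young S \<Longrightarrow> finite S" by (simp add: young_def)

lemma young_down: "young S \<Longrightarrow> (i,j) \<in> S \<Longrightarrow> i' \<le> i \<Longrightarrow> j' \<le> j \<Longrightarrow> (i',j') \<in> S"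
  unfolding young_def by blast

lemma tr_tr[simp]: "tr (tr S) = S"
  unfolding tr_def by (simp add: image_image)

lemma mem_tr[simp]: "(i,j) \<in> tr S \<longleftrightarrow> (j,i) \<in> S"
  unfolding tr_def by force

lemma tr_inj: "tr A = tr B \<longleftrightarrow> A = B"
  by (metis tr_tr)

lemma tr_union[simp]: "tr (A \<union> B) = tr A \<union> tr B" unfolding tr_def by auto
lemma tr_diff[simp]: "tr (A - B) = tr A - tr B" unfolding tr_def by auto
lemma tr_int[simp]: "tr (A \<inter> B) = tr A \<inter> tr B" unfolding tr_def by auto
lemma tr_insert[simp]: "tr (insert (i,j) A) = insert (j,i) (tr A)" unfolding tr_def by auto
lemma tr_empty[simp]: "tr {} = {}" unfolding tr_def by auto
lemma tr_subset[simp]: "tr A \<subseteq> tr B \<longleftrightarrow> A \<subseteq> B"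
  unfolding tr_def by auto
lemma finite_tr[simp]: "finite (tr A) \<longleftrightarrow> finite A"
  unfolding tr_def by (simp add: finite_image_iff)
lemma card_tr[simp]: "card (tr A) = card A"
  unfolding tr_def by (simp add: card_image)

lemma young_tr[simp]: "young (tr S) \<longleftrightarrow> young S"
  unfolding young_def by auto

lemma young_bound: "young S \<Longrightarrow> \<exists>M. \<forall>i j. (i,j) \<in> S \<longrightarrow> i < M \<and> j < M"
proof -
  assume "young S"
  then have f: "finite S" by (simp add: young_def)
  define M where "M = Suc (Max (fst ` S \<union> snd ` S))"
  have "\<forall>i j. (i,j) \<in> S \<longrightarrow> i < M \<and> j < M"
  proof (intro allI impI)
    fix i j assume "(i,j) \<in> S"
    then have "i \<in> fst ` S \<union> snd ` S" "j \<in> fst ` S \<union> snd ` S" by force+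
    moreover have "finite (fst ` S \<union> snd ` S)" using f by simp
    ultimately have "i \<le> Max (fst ` S \<union> snd ` S)" "j \<le> Max (fst ` S \<union> snd ` S)" by (auto intro: Max_ge)
    then show "i < M \<and> j < M" unfolding M_def by simp
  qed
  then show ?thesis by blast
qed

lemma young_row_iff: assumes "young S" shows "(i,j) \<in> S \<longleftrightarrow> j < rowlen S i"
proof -
  have "{j. (i,j) \<in> S} \<subseteq> snd ` S" by force
  then have f: "finite {j. (i,j) \<in> S}" using young_finite[OF assms] finite_subset by blast
  show ?thesis
  proof
    assume "(i,j) \<in> S"
    then have "{..j} \<subseteq> {j. (i,j) \<in> S}" using young_down[OF assms, of i j i] by blast
    then have "card {..j} \<le> rowlen S i" unfolding rowlen_def using f card_mono by blast
    then show "j < rowlen S i" by simp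
  next
    assume "j < rowlen S i"
    show "(i,j) \<in> S"
    proof (rule ccontr)
      assume "(i,j) \<notin> S"
      then have "{j. (i,j) \<in> S} \<subseteq> {..<j}" using young_down[OF assms, of i _ i j]
        by (metis (mono_tags, lifting) lessThan_iff linorder_not_less mem_Collect_eq subsetI order_refl)
      then have "card {j. (i,j) \<in> S} \<le> card {..<j}"
        by (intro card_mono) auto
      then have "rowlen S i \<le> j" unfolding rowlen_def by simp
      with \<open>j < rowlen S i\<close> show False by simp
    qed
  qed
qed

lemma rowlen_mono: assumes "young S" "i \<le> i'" shows "rowlen S i' \<le> rowlen S i"
proof (rule ccontr)
  assume "\<not> ?thesis"
  then have "rowlen S i < rowlen S i'" by simp
  then have "(i', rowlen S i) \<in> S" using young_row_iff[OF assms(1)] by blast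
  then have "(i, rowlen S i) \<in> S" using young_down[OF assms(1)] assms(2) by blast
  then show False using young_row_iff[OF assms(1)] by blast
qed

lemma rowlen_big: assumes "young S" "\<forall>i j. (i,j) \<in> S \<longrightarrow> i < M \<and> j < M" "M \<le> i"
  shows "rowlen S i = 0"
proof (rule ccontr)
  assume "rowlen S i \<noteq> 0"
  then have "(i,0) \<in> S" using young_row_iff[OF assms(1), of i 0] by simp
  then show False using assms(2,3) by force
qed

lemma young_eqI: assumes "young S" "young T" "\<And>i. rowlen S i = rowlen T i" shows "S = T"
  using assms young_row_iff by auto

lemma young_Int: "young S \<Longrightarrow> young T \<Longrightarrow> young (S \<inter> T)"
  unfolding young_def by blast
lemma young_Un: "young S \<Longrightarrow> young T \<Longrightarrow> young (S \<union> T)"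
  unfolding young_def by blast

definition stepS :: "(nat \<times> nat) set \<Rightarrow> (nat \<times> nat) set \<Rightarrow> bool" where
  "stepS P S \<longleftrightarrow> young P \<and> young S \<and> P \<subseteq> S \<and> is_domino (S - P)"

definition addH :: "(nat \<times> nat) set \<Rightarrow> nat \<Rightarrow> (nat \<times> nat) set" where
  "addH S k = S \<union> {(k, rowlen S k), (k, Suc (rowlen S k))}"

definition remH :: "(nat \<times> nat) set \<Rightarrow> nat \<Rightarrow> (nat \<times> nat) set" where
  "remH S k = S - {(k, rowlen S k - 2), (k, rowlen S k - 1)}"

definition AH :: "(nat \<times> nat) set \<Rightarrow> nat set" where
  "AH S = {k. k = 0 \<or> rowlen S k + 2 \<le> rowlen S (k - 1)}"

definition RH :: "(nat \<times> nat) set \<Rightarrow> nat set" where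
  "RH S = {i. rowlen S (Suc i) + 2 \<le> rowlen S i}"

lemma hor_tr: "horizontal_domino (tr D) \<longleftrightarrow> vertical_domino D"
  unfolding horizontal_domino_def vertical_domino_def
  by (metis tr_empty tr_insert tr_tr)

lemma vert_tr: "vertical_domino (tr D) \<longleftrightarrow> horizontal_domino D"
  by (metis hor_tr tr_tr)

lemma dom_tr: "is_domino (tr D) \<longleftrightarrow> is_domino D"
  unfolding is_domino_def using hor_tr vert_tr by blast

lemma not_hor_vert: "horizontal_domino D \<Longrightarrow> \<not> vertical_domino D"
  unfolding horizontal_domino_def vertical_domino_def
  by (auto simp: doubleton_eq_iff)

lemma stepS_tr: "stepS (tr P) (tr S) \<longleftrightarrow> stepS P S"
  unfolding stepS_def by (metis dom_tr tr_diff tr_subset young_tr)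

lemma AH_RH: "AH S = insert 0 (Suc ` RH S)"
proof
  show "AH S \<subseteq> insert 0 (Suc ` RH S)"
  proof
    fix k assume k: "k \<in> AH S"
    show "k \<in> insert 0 (Suc ` RH S)"
    proof (cases k)
      case (Suc m)
      then have "m \<in> RH S" using k unfolding AH_def RH_def by simp
      then show ?thesis using Suc by blast
    qed simp
  qed
next
  show "insert 0 (Suc ` RH S) \<subseteq> AH S" unfolding AH_def RH_def by auto
qed

lemma RH_finite: assumes "young S" shows "finite (RH S)"
proof -
  obtain M where M: "\<forall>i j. (i,j) \<in> S \<longrightarrow> i < M \<and> j < M" using young_bound[OF assms] by blast
  have "RH S \<subseteq> {..<M}"
  proof
    fix i assume "i \<in> RH S"
    then have "rowlen S i \<noteq> 0" unfolding RH_def by auto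
    then show "i \<in> {..<M}" using rowlen_big[OF assms M] by (meson lessThan_iff not_le)
  qed
  then show ?thesis using finite_subset by blast
qed

lemma AH_finite: "young S \<Longrightarrow> finite (AH S)"
  using AH_RH RH_finite by simp

lemma rowlen_addH_cells:
  assumes "young S"
  shows "(i,j) \<in> addH S k \<longleftrightarrow> (if i = k then j < rowlen S k + 2 else j < rowlen S i)"
  unfolding addH_def using young_row_iff[OF assms] by auto

lemma rowlen_eq_card_lt: assumes "\<And>j. (i,j) \<in> S \<longleftrightarrow> j < m" shows "rowlen S i = m"
proof -
  have "{j. (i,j) \<in> S} = {..<m}" using assms by auto
  then show ?thesis unfolding rowlen_def by simp
qed

lemma rowlen_addH: assumes "young S"
  shows "rowlen (addH S k) i = rowlen S i + (if i = k then 2 else 0)"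
  by (rule rowlen_eq_card_lt) (simp add: rowlen_addH_cells[OF assms])

lemma addH_step:
  assumes y: "young S" and k: "k \<in> AH S"
  shows "stepS S (addH S k) \<and> horizontal_domino (addH S k - S)"
proof -
  let ?j = "rowlen S k"
  have nin: "(k, ?j) \<notin> S" "(k, Suc ?j) \<notin> S" using young_row_iff[OF y] by auto
  have diff: "addH S k - S = {(k, ?j), (k, Suc ?j)}" unfolding addH_def using nin by auto
  have hd: "horizontal_domino (addH S k - S)" unfolding diff horizontal_domino_def by blast
  have yA: "young (addH S k)"
    unfolding young_def
  proof (intro conjI allI impI)
    show "finite (addH S k)" unfolding addH_def using young_finite[OF y] by simp
  next
    fix i j i' j' assume ij: "(i,j) \<in> addH S k" and le: "i' \<le> i" "j' \<le> j"
    show "(i',j') \<in> addH S k"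
    proof (cases "i = k")
      case False
      then have "(i,j) \<in> S" using ij unfolding addH_def by auto
      then have "(i',j') \<in> S" using young_down[OF y] le by blast
      then show ?thesis unfolding addH_def by auto
    next
      case True
      then have jl: "j < ?j + 2" using ij rowlen_addH_cells[OF y] by auto
      show ?thesis
      proof (cases "i' = k")
        case True
        then show ?thesis using jl le rowlen_addH_cells[OF y] by auto
      next
        case False
        then have "i' < k" using le \<open>i = k\<close> by auto
        then have "k \<noteq> 0" by auto
        then have "?j + 2 \<le> rowlen S (k - 1)" using k unfolding AH_def by auto
        moreover have "rowlen S (k - 1) \<le> rowlen S i'" using rowlen_mono[OF y] \<open>i' < k\<close> by auto
        ultimately have "j' < rowlen S i'" using jl le by linarith
        then show ?thesis using rowlen_addH_cells[OF y] False by auto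
      qed
    qed
  qed
  show ?thesis unfolding stepS_def is_domino_def using y yA hd by (auto simp: addH_def)
qed

lemma step_hor:
  assumes st: "stepS S S'" and h: "horizontal_domino (S' - S)"
  shows "\<exists>k\<in>AH S. S' = addH S k"
proof -
  have y: "young S" and y': "young S'" and sub: "S \<subseteq> S'" using st unfolding stepS_def by auto
  obtain k j where D: "S' - S = {(k,j),(k,Suc j)}" using h unfolding horizontal_domino_def by auto
  have in1: "(k,j) \<in> S'" "(k,Suc j) \<in> S'" and out: "(k,j) \<notin> S" "(k, Suc j) \<notin> S" using D by blast+
  have "\<forall>j'<j. (k,j') \<in> S"
  proof (intro allI impI)
    fix j' assume "j' < j"
    then have "(k,j') \<in> S'" using young_down[OF y' in1(1), of k j'] by auto
    moreover have "(k,j') \<notin> S' - S" using D \<open>j' < j\<close> by auto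
    ultimately show "(k,j') \<in> S" by blast
  qed
  then have "j \<le> rowlen S k" using young_row_iff[OF y] by (metis not_le less_irrefl)
  moreover have "rowlen S k \<le> j" using out(1) young_row_iff[OF y] by (meson not_le)
  ultimately have jr: "j = rowlen S k" by simp
  have "k \<in> AH S"
  proof (cases "k = 0")
    case True then show ?thesis unfolding AH_def by simp
  next
    case False
    then have "(k - 1, Suc j) \<in> S'" using young_down[OF y' in1(2), of "k-1" "Suc j"] by auto
    moreover have "(k - 1, Suc j) \<notin> S' - S" using D False by auto
    ultimately have "(k - 1, Suc j) \<in> S" by blast
    then have "Suc j < rowlen S (k - 1)" using young_row_iff[OF y] by blast
    then show ?thesis unfolding AH_def using jr by auto
  qed
  moreover have "S' = addH S k" unfolding addH_def using D sub jr by blast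
  ultimately show ?thesis by blast
qed

lemma addH_inj: assumes "young S" "addH S k = addH S k'" shows "k = k'"
proof -
  have "(k, rowlen S k) \<in> addH S k" unfolding addH_def by simp
  then have "(k, rowlen S k) \<in> addH S k'" using assms by simp
  then show ?thesis using rowlen_addH_cells[OF assms(1)] by (auto split: if_splits)
qed

lemma addH_RH: assumes y: "young P" and k: "k \<in> AH P" shows "k \<in> RH (addH P k)"
proof -
  have "rowlen P (Suc k) \<le> rowlen P k" using rowlen_mono[OF y] by simp
  then show ?thesis unfolding RH_def using rowlen_addH[OF y] by simp
qed

lemma remH_addH: assumes y: "young P" shows "remH (addH P k) k = P"
proof -
  have "(k, rowlen P k) \<notin> P" "(k, Suc (rowlen P k)) \<notin> P" using young_row_iff[OF y] by auto
  then show ?thesis unfolding remH_def using rowlen_addH[OF y, of k k]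
    by (auto simp: addH_def)
qed

lemma RH_remH:
  assumes y: "young S" and i: "i \<in> RH S"
  shows "young (remH S i) \<and> i \<in> AH (remH S i) \<and> addH (remH S i) i = S"
proof -
  let ?P = "remH S i"
  have r2: "rowlen S i \<ge> 2" using i unfolding RH_def by auto
  have cP: "(a,b) \<in> ?P \<longleftrightarrow> (if a = i then b < rowlen S i - 2 else b < rowlen S a)" for a b
    unfolding remH_def using young_row_iff[OF y] r2 by auto
  have yP: "young ?P"
    unfolding young_def
  proof (intro conjI allI impI)
    show "finite ?P" unfolding remH_def using young_finite[OF y] by simp
  next
    fix a b a' b' assume ab: "(a,b) \<in> ?P" and le: "a' \<le> a" "b' \<le> b"
    show "(a',b') \<in> ?P"
    proof (cases "a' = i")
      case True
      then have "a = i \<or> i < a" using le by auto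
      then show ?thesis
      proof
        assume "a = i" then show ?thesis using ab le True cP by auto
      next
        assume "i < a"
        then have "rowlen S a \<le> rowlen S (Suc i)" using rowlen_mono[OF y] by simp
        then show ?thesis using ab le True cP i unfolding RH_def by (auto split: if_splits)
      qed
    next
      case False
      have "(a,b) \<in> S" using ab unfolding remH_def by auto
      then have "(a',b') \<in> S" using young_down[OF y] le by blast
      then show ?thesis using cP False young_row_iff[OF y] by auto
    qed
  qed
  have rl: "rowlen ?P a = (if a = i then rowlen S i - 2 else rowlen S a)" for a
    by (rule rowlen_eq_card_lt) (simp add: cP)
  have "i \<in> AH ?P"
  proof (cases "i = 0")
    case True then show ?thesis unfolding AH_def by simp
  next
    case False
    have "rowlen S i \<le> rowlen S (i - 1)" using rowlen_mono[OF y] by simp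
    then show ?thesis unfolding AH_def using rl False r2 by auto
  qed
  moreover have "addH ?P i = S"
  proof (rule young_eqI)
    show "young (addH ?P i)" using addH_step[OF yP \<open>i \<in> AH ?P\<close>] unfolding stepS_def by blast
    show "young S" by fact
    fix a show "rowlen (addH ?P i) a = rowlen S a" using r2 by (auto simp: rowlen_addH[OF yP] rl)
  qed
  ultimately show ?thesis using yP by blast
qed

definition upH where "upH S = {S'. stepS S S' \<and> horizontal_domino (S' - S)}"
definition downH where "downH S = {P. stepS P S \<and> horizontal_domino (S - P)}"

lemma upH_eq: assumes "young S" shows "upH S = addH S ` AH S" "inj_on (addH S) (AH S)"
  using addH_step[OF assms] step_hor addH_inj[OF assms] unfolding upH_def inj_on_def by blast+

lemma downH_eq: assumes y: "young S" shows "downH S = remH S ` RH S" "inj_on (remH S) (RH S)"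
proof -
  show "downH S = remH S ` RH S"
  proof
    show "downH S \<subseteq> remH S ` RH S"
    proof
      fix P assume "P \<in> downH S"
      then have st: "stepS P S" "horizontal_domino (S - P)" unfolding downH_def by auto
      then obtain k where k: "k \<in> AH P" "S = addH P k" using step_hor by blast
      have yP: "young P" using st unfolding stepS_def by auto
      show "P \<in> remH S ` RH S"
        using addH_RH[OF yP k(1)] remH_addH[OF yP] k(2) by blast
    qed
  next
    show "remH S ` RH S \<subseteq> downH S"
    proof
      fix P assume "P \<in> remH S ` RH S"
      then obtain i where i: "i \<in> RH S" "P = remH S i" by blast
      then have "young P" "i \<in> AH P" "addH P i = S" using RH_remH[OF y] by auto
      then show "P \<in> downH S" unfolding downH_def using addH_step by blast
    qed
  qed
  show "inj_on (remH S) (RH S)"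
    unfolding inj_on_def by (metis RH_remH[OF y] addH_inj)
qed

definition orow :: "(nat \<times> nat) set \<Rightarrow> nat" where
  "orow S = card {i. odd (rowlen S i)}"
definition ocol :: "(nat \<times> nat) set \<Rightarrow> nat" where
  "ocol S = orow (tr S)"
definition dd :: "(nat \<times> nat) set \<Rightarrow> nat" where
  "dd S = card (S \<inter> {p. odd (fst p) \<and> odd (snd p)})"

lemma dd_tr[simp]: "dd (tr S) = dd S"
proof -
  have "tr S \<inter> {p. odd (fst p) \<and> odd (snd p)} = tr (S \<inter> {p. odd (fst p) \<and> odd (snd p)})"
    unfolding tr_def by auto
  then show ?thesis unfolding dd_def by (metis card_tr)
qed

lemma ocol_tr[simp]: "ocol (tr S) = orow S" unfolding ocol_def by simp

lemma odd_rows_finite: assumes "young S" shows "finite {i. odd (rowlen S i)}"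
proof -
  obtain M where M: "\<forall>i j. (i,j) \<in> S \<longrightarrow> i < M \<and> j < M" using young_bound[OF assms] by blast
  have "{i. odd (rowlen S i)} \<subseteq> {..<M}"
    using rowlen_big[OF assms M] by (metis (mono_tags, lifting) lessThan_iff mem_Collect_eq not_le odd_pos subsetI less_irrefl)
  then show ?thesis using finite_subset by blast
qed

lemma card_odd_shift:
  fixes g g' :: "nat \<Rightarrow> nat"
  assumes fin: "finite {j. odd (g j)}" and g': "\<And>j. g' j = g j + (if j = p \<or> j = q then 1 else 0)"
    and pq: "p \<noteq> q" and gp: "g p = k" and gq: "g q = k"
  shows "card {j. odd (g' j)} + (if odd k then 2 else 0) = card {j. odd (g j)} + (if even k then 2 else 0)"
proof (cases "odd k")
  case True
  have eq: "{j. odd (g j)} = insert p (insert q {j. odd (g' j)})" using g' gp gq True pq by auto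
  have "p \<notin> {j. odd (g' j)}" "q \<notin> {j. odd (g' j)}" using g' gp gq True by auto
  moreover have "finite {j. odd (g' j)}" using fin eq by (metis finite_insert)
  ultimately show ?thesis using eq True pq by simp
next
  case False
  have eq: "{j. odd (g' j)} = insert p (insert q {j. odd (g j)})" using g' gp gq False pq by auto
  have "p \<notin> {j. odd (g j)}" "q \<notin> {j. odd (g j)}" using gp gq False by auto
  then show ?thesis using eq False pq fin by simp
qed

lemma col_addH:
  assumes y: "young S" and k: "k \<in> AH S"
  shows "rowlen (tr S) (rowlen S k) = k" "rowlen (tr S) (Suc (rowlen S k)) = k"
    "\<And>j. rowlen (tr (addH S k)) j = rowlen (tr S) j + (if j = rowlen S k \<or> j = Suc (rowlen S k) then 1 else 0)"
proof -
  let ?j = "rowlen S k"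
  have key: "(i, j) \<in> S \<longleftrightarrow> i < k" if "j = ?j \<or> j = Suc ?j" for i j
  proof
    assume "(i,j) \<in> S"
    then have "j < rowlen S i" using young_row_iff[OF y] by blast
    show "i < k"
    proof (rule ccontr)
      assume "\<not> i < k"
      then have "rowlen S i \<le> rowlen S k" using rowlen_mono[OF y] by simp
      then show False using \<open>j < rowlen S i\<close> that by auto
    qed
  next
    assume "i < k"
    then have "k \<noteq> 0" by simp
    then have "?j + 2 \<le> rowlen S (k - 1)" using k unfolding AH_def by auto
    moreover have "rowlen S (k-1) \<le> rowlen S i" using rowlen_mono[OF y] \<open>i < k\<close> by simp
    ultimately show "(i,j) \<in> S" using young_row_iff[OF y] that by auto
  qed
  show "rowlen (tr S) ?j = k" by (rule rowlen_eq_card_lt) (simp add: key)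
  show "rowlen (tr S) (Suc ?j) = k" by (rule rowlen_eq_card_lt) (simp add: key)
  fix j
  show "rowlen (tr (addH S k)) j = rowlen (tr S) j + (if j = ?j \<or> j = Suc ?j then 1 else 0)"
  proof (cases "j = ?j \<or> j = Suc ?j")
    case True
    have "(i,j) \<in> addH S k \<longleftrightarrow> (i,j) \<in> S \<or> i = k" for i using True unfolding addH_def by blast
    then have "(i,j) \<in> addH S k \<longleftrightarrow> i < Suc k" for i using key[OF True, of i] by auto
    moreover have "rowlen (tr S) j = k" using True key by (intro rowlen_eq_card_lt) auto
    ultimately show ?thesis using True by (intro rowlen_eq_card_lt) auto
  next
    case False
    then have "(i,j) \<in> addH S k \<longleftrightarrow> (i,j) \<in> S" for i unfolding addH_def by auto
    then have "(j,i) \<in> tr (addH S k) \<longleftrightarrow> i < rowlen (tr S) j" for i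
      using young_row_iff[of "tr S" j i] y by simp
    then show ?thesis using False by (intro rowlen_eq_card_lt) auto
  qed
qed

lemma orow_addH: assumes y: "young S" shows "orow (addH S k) = orow S"
proof -
  have "{i. odd (rowlen (addH S k) i)} = {i. odd (rowlen S i)}" by (auto simp: rowlen_addH[OF y])
  then show ?thesis unfolding orow_def by simp
qed

lemma ocol_addH: assumes y: "young S" and k: "k \<in> AH S"
  shows "ocol (addH S k) + (if odd k then 2 else 0) = ocol S + (if even k then 2 else 0)"
  unfolding ocol_def orow_def
  by (rule card_odd_shift[OF odd_rows_finite col_addH(3)[OF y k] _ col_addH(1,2)[OF y k]])
     (use y in auto)

lemma dd_addH: assumes y: "young S"
  shows "dd (addH S k) = dd S + (if odd k then 1 else 0)"
proof -
  let ?O = "{p. odd (fst p) \<and> odd (snd p)}"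
  let ?D = "{(k, rowlen S k), (k, Suc (rowlen S k))}"
  have dis: "S \<inter> ?D = {}" using young_row_iff[OF y] by auto
  have eq: "addH S k \<inter> ?O = (S \<inter> ?O) \<union> (?D \<inter> ?O)" unfolding addH_def by auto
  have fin: "finite (S \<inter> ?O)" using young_finite[OF y] by simp
  have c: "card (?D \<inter> ?O) = (if odd k then 1 else 0)"
  proof (cases "odd k")
    case True
    then show ?thesis
    proof (cases "odd (rowlen S k)")
      case True
      then have "?D \<inter> ?O = {(k, rowlen S k)}" using \<open>odd k\<close> by auto
      then show ?thesis using \<open>odd k\<close> by simp
    next
      case False
      then have "?D \<inter> ?O = {(k, Suc (rowlen S k))}" using \<open>odd k\<close> by auto
      then show ?thesis using \<open>odd k\<close> by simp
    qed
  next
    case False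
    then have "?D \<inter> ?O = {}" by auto
    then show ?thesis using False by simp
  qed
  have "card (addH S k \<inter> ?O) = card (S \<inter> ?O) + card (?D \<inter> ?O)"
    unfolding eq using dis fin by (intro card_Un_disjoint) auto
  then show ?thesis unfolding dd_def c by simp
qed

definition wt :: "complex \<Rightarrow> complex \<Rightarrow> complex \<Rightarrow> (nat \<times> nat) set \<Rightarrow> complex" where
  "wt x y c S = x ^ orow S * y ^ ocol S * c ^ dd S"

lemma wt_tr: "wt x y c (tr S) = wt y x c S"
  unfolding wt_def ocol_def by simp

lemma wt_addH0: assumes y: "young S" shows "wt x y c (addH S 0) = y^2 * wt x y c S"
proof -
  have "0 \<in> AH S" unfolding AH_def by simp
  from ocol_addH[OF y this] have "ocol (addH S 0) = ocol S + 2" by simp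
  then show ?thesis unfolding wt_def using orow_addH[OF y] dd_addH[OF y, of 0]
    by (simp add: power_add power2_eq_square mult_ac)
qed

lemma wt_shift: assumes y: "young S" and i: "i \<in> RH S"
  shows "wt x y c (addH S (Suc i)) = c * wt x y c (remH S i)"
proof -
  let ?P = "remH S i"
  have P: "young ?P" "i \<in> AH ?P" "addH ?P i = S" using RH_remH[OF y i] by auto
  have si: "Suc i \<in> AH S" using i unfolding AH_def RH_def by simp
  have o1: "orow (addH S (Suc i)) = orow ?P" using orow_addH[OF y] orow_addH[OF P(1), of i] P(3) by simp
  have c1: "ocol S + (if odd i then 2 else 0) = ocol ?P + (if even i then 2 else 0)"
    using ocol_addH[OF P(1,2)] P(3) by simp
  have c2: "ocol (addH S (Suc i)) + (if odd (Suc i) then 2 else 0) = ocol S + (if even (Suc i) then 2 else 0)"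
    using ocol_addH[OF y si] .
  have c3: "ocol (addH S (Suc i)) = ocol ?P" using c1 c2 by (cases "odd i") auto
  have d1: "dd S = dd ?P + (if odd i then 1 else 0)" using dd_addH[OF P(1), of i] P(3) by simp
  have d2: "dd (addH S (Suc i)) = dd S + (if odd (Suc i) then 1 else 0)" using dd_addH[OF y] .
  have d3: "dd (addH S (Suc i)) = Suc (dd ?P)" using d1 d2 by (cases "odd i") auto
  show ?thesis unfolding wt_def o1 c3 d3 by simp
qed

lemma H_identity: assumes y: "young S"
  shows "(\<Sum>S'\<in>upH S. wt x y c S') = y^2 * wt x y c S + c * (\<Sum>P\<in>downH S. wt x y c P)"
proof -
  have "(\<Sum>S'\<in>upH S. wt x y c S') = (\<Sum>k\<in>AH S. wt x y c (addH S k))"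
    using upH_eq[OF y] by (simp add: sum.reindex)
  also have "\<dots> = wt x y c (addH S 0) + (\<Sum>k\<in>Suc ` RH S. wt x y c (addH S k))"
    unfolding AH_RH using RH_finite[OF y] by (simp add: image_iff)
  also have "(\<Sum>k\<in>Suc ` RH S. wt x y c (addH S k)) = (\<Sum>i\<in>RH S. wt x y c (addH S (Suc i)))"
    by (simp add: sum.reindex)
  also have "\<dots> = c * (\<Sum>i\<in>RH S. wt x y c (remH S i))"
    using wt_shift[OF y] by (simp add: sum_distrib_left)
  also have "(\<Sum>i\<in>RH S. wt x y c (remH S i)) = (\<Sum>P\<in>downH S. wt x y c P)"
    using downH_eq[OF y] by (simp add: sum.reindex)
  finally show ?thesis using wt_addH0[OF y] by simp
qed

lemma card_AH: assumes y: "young S" shows "card (AH S) = Suc (card (RH S))"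
  unfolding AH_RH using RH_finite[OF y] by (simp add: image_iff card_image)

lemma card_upH: assumes y: "young S" shows "card (upH S) = Suc (card (downH S))"
  using card_AH[OF y] upH_eq[OF y] downH_eq[OF y] by (simp add: card_image)

definition upS where "upS S = {S'. stepS S S'}"
definition downS where "downS S = {P. stepS P S}"
definition upV where "upV S = {S'. stepS S S' \<and> vertical_domino (S' - S)}"
definition downV where "downV S = {P. stepS P S \<and> vertical_domino (S - P)}"

definition sv :: "complex \<Rightarrow> (nat \<times> nat) set \<Rightarrow> (nat \<times> nat) set \<Rightarrow> complex" where
  "sv s P S = (if vertical_domino (S - P) then s else 1)"

lemma upV_tr: "upV S = tr ` upH (tr S)"
proof -
  have "S' \<in> upV S \<longleftrightarrow> tr S' \<in> upH (tr S)" for S'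
    unfolding upV_def upH_def using stepS_tr[of S S'] hor_tr[of "S' - S"] by simp
  then show ?thesis by (metis (no_types, lifting) image_iff subsetI subset_antisym tr_tr)
qed

lemma downV_tr: "downV S = tr ` downH (tr S)"
proof -
  have "P \<in> downV S \<longleftrightarrow> tr P \<in> downH (tr S)" for P
    unfolding downV_def downH_def using stepS_tr[of P S] hor_tr[of "S - P"] by simp
  then show ?thesis by (metis (no_types, lifting) image_iff subsetI subset_antisym tr_tr)
qed

lemma inj_tr: "inj_on tr A" unfolding inj_on_def using tr_inj by blast

lemma upS_split: "upS S = upH S \<union> upV S" "upH S \<inter> upV S = {}"
  unfolding upS_def upH_def upV_def stepS_def is_domino_def using not_hor_vert by blast+

lemma downS_split: "downS S = downH S \<union> downV S" "downH S \<inter> downV S = {}"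
  unfolding downS_def downH_def downV_def stepS_def is_domino_def using not_hor_vert by blast+

lemma fin_upH: "young S \<Longrightarrow> finite (upH S)" using upH_eq AH_finite by simp
lemma fin_downH: "young S \<Longrightarrow> finite (downH S)" using downH_eq RH_finite by simp
lemma fin_upV: "young S \<Longrightarrow> finite (upV S)" using upV_tr fin_upH young_tr by simp
lemma fin_downV: "young S \<Longrightarrow> finite (downV S)" using downV_tr fin_downH young_tr by simp
lemma fin_upS: "young S \<Longrightarrow> finite (upS S)" using upS_split fin_upH fin_upV by simp
lemma fin_downS: "young S \<Longrightarrow> finite (downS S)" using downS_split fin_downH fin_downV by simp

lemma sv_H: "S' \<in> upH S \<Longrightarrow> sv s S S' = 1" unfolding sv_def upH_def using not_hor_vert by auto
lemma sv_V: "S' \<in> upV S \<Longrightarrow> sv s S S' = s" unfolding sv_def upV_def by auto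
lemma sv_dH: "P \<in> downH S \<Longrightarrow> sv s P S = 1" unfolding sv_def downH_def using not_hor_vert by auto
lemma sv_dV: "P \<in> downV S \<Longrightarrow> sv s P S = s" unfolding sv_def downV_def by auto

lemma V_identity: assumes y: "young S"
  shows "(\<Sum>S'\<in>upV S. wt x y c S') = x^2 * wt x y c S + c * (\<Sum>P\<in>downV S. wt x y c P)"
proof -
  have "(\<Sum>S'\<in>upV S. wt x y c S') = (\<Sum>S'\<in>upH (tr S). wt x y c (tr S'))"
    unfolding upV_tr by (simp add: sum.reindex inj_tr)
  also have "\<dots> = (\<Sum>S'\<in>upH (tr S). wt y x c S')" by (simp add: wt_tr)
  also have "\<dots> = x^2 * wt y x c (tr S) + c * (\<Sum>P\<in>downH (tr S). wt y x c P)"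
    using H_identity[of "tr S"] y by simp
  also have "(\<Sum>P\<in>downH (tr S). wt y x c P) = (\<Sum>P\<in>downH (tr S). wt x y c (tr P))"
    by (simp add: wt_tr)
  also have "\<dots> = (\<Sum>P\<in>downV S. wt x y c P)"
    unfolding downV_tr by (simp add: sum.reindex inj_tr)
  finally show ?thesis by (simp add: wt_tr)
qed

lemma L_identity: assumes y: "young S"
  shows "(\<Sum>S'\<in>upS S. sv s S S' * wt x y c S') =
    (y^2 + x^2 * s) * wt x y c S + c * (\<Sum>P\<in>downS S. sv s P S * wt x y c P)"
proof -
  have "(\<Sum>S'\<in>upS S. sv s S S' * wt x y c S') =
      (\<Sum>S'\<in>upH S. sv s S S' * wt x y c S') + (\<Sum>S'\<in>upV S. sv s S S' * wt x y c S')"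
    using upS_split fin_upH[OF y] fin_upV[OF y] by (simp add: sum.union_disjoint)
  also have "\<dots> = (\<Sum>S'\<in>upH S. wt x y c S') + s * (\<Sum>S'\<in>upV S. wt x y c S')"
    using sv_H sv_V by (simp add: sum_distrib_left)
  also have "\<dots> = (y^2 + x^2 * s) * wt x y c S + c * ((\<Sum>P\<in>downH S. wt x y c P) + s * (\<Sum>P\<in>downV S. wt x y c P))"
    using H_identity[OF y] V_identity[OF y] by (simp add: algebra_simps)
  also have "(\<Sum>P\<in>downH S. wt x y c P) + s * (\<Sum>P\<in>downV S. wt x y c P) =
      (\<Sum>P\<in>downH S. sv s P S * wt x y c P) + (\<Sum>P\<in>downV S. sv s P S * wt x y c P)"
    using sv_dH sv_dV by (simp add: sum_distrib_left)
  also have "\<dots> = (\<Sum>P\<in>downS S. sv s P S * wt x y c P)"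
    using downS_split fin_downH[OF y] fin_downV[OF y] by (simp add: sum.union_disjoint)
  finally show ?thesis .
qed

lemma card_upV: assumes y: "young S" shows "card (upV S) = Suc (card (downV S))"
proof -
  have "card (upV S) = card (upH (tr S))" unfolding upV_tr by (simp add: card_image inj_tr)
  also have "\<dots> = Suc (card (downH (tr S)))" using card_upH y by simp
  also have "card (downH (tr S)) = card (downV S)" unfolding downV_tr by (simp add: card_image inj_tr)
  finally show ?thesis .
qed

lemma diag_identity: assumes y: "young S"
  shows "(\<Sum>S'\<in>upS S. sv s S S' * sv s S S') = 1 + s^2 + (\<Sum>P\<in>downS S. sv s P S * sv s P S)"
proof -
  have "(\<Sum>S'\<in>upS S. sv s S S' * sv s S S') = of_nat (card (upH S)) + of_nat (card (upV S)) * s^2"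
    using upS_split fin_upH[OF y] fin_upV[OF y] sv_H sv_V by (simp add: sum.union_disjoint power2_eq_square)
  moreover have "(\<Sum>P\<in>downS S. sv s P S * sv s P S) = of_nat (card (downH S)) + of_nat (card (downV S)) * s^2"
    using downS_split fin_downH[OF y] fin_downV[OF y] sv_dH sv_dV by (simp add: sum.union_disjoint power2_eq_square)
  ultimately show ?thesis using card_upH[OF y] card_upV[OF y] by (simp add: algebra_simps)
qed

definition adj :: "nat \<times> nat \<Rightarrow> nat \<times> nat \<Rightarrow> bool" where
  "adj p q \<longleftrightarrow> (fst p = fst q \<and> (snd q = Suc (snd p) \<or> snd p = Suc (snd q))) \<or>
                (snd p = snd q \<and> (fst q = Suc (fst p) \<or> fst p = Suc (fst q)))"

lemma adj_sym: "adj p q \<Longrightarrow> adj q p" unfolding adj_def by auto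
lemma adj_neq: "adj p q \<Longrightarrow> p \<noteq> q" unfolding adj_def by auto

lemma dom_cases: assumes "is_domino D" shows "\<exists>p q. D = {p,q} \<and> adj p q"
proof -
  have "vertical_domino D \<or> horizontal_domino D" using assms unfolding is_domino_def .
  then show ?thesis
  proof
    assume "vertical_domino D"
    then obtain i j where "D = {(i,j),(Suc i,j)}" unfolding vertical_domino_def by blast
    moreover have "adj (i,j) (Suc i,j)" unfolding adj_def by simp
    ultimately show ?thesis by blast
  next
    assume "horizontal_domino D"
    then obtain i j where "D = {(i,j),(i,Suc j)}" unfolding horizontal_domino_def by blast
    moreover have "adj (i,j) (i,Suc j)" unfolding adj_def by simp
    ultimately show ?thesis by blast
  qed
qed

lemma dom_other: assumes "is_domino D" "y \<in> D" shows "\<exists>z. D = {y,z} \<and> adj y z"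
proof -
  obtain p q where "D = {p,q}" "adj p q" using dom_cases[OF assms(1)] by blast
  then show ?thesis
  proof (cases "y = p")
    case True then show ?thesis using \<open>D = {p,q}\<close> \<open>adj p q\<close> by blast
  next
    case False
    then have "y = q" using assms(2) \<open>D = {p,q}\<close> by blast
    then have "D = {y, p}" "adj y p" using \<open>D = {p,q}\<close> \<open>adj p q\<close> adj_sym by auto
    then show ?thesis by blast
  qed
qed

lemma dom_card: "is_domino D \<Longrightarrow> card D = 2"
proof -
  assume "is_domino D"
  then obtain p q where "D = {p,q}" "adj p q" using dom_cases by blast
  then show ?thesis using adj_neq[of p q] by simp
qed

lemma stepS_card: assumes "stepS P S" shows "card S = card P + 2"
proof -
  have f: "finite S" "P \<subseteq> S" using assms unfolding stepS_def young_def by auto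
  then have "card S = card P + card (S - P)"
    by (metis card_Diff_subset finite_subset card_mono add_diff_inverse_nat not_less)
  then show ?thesis using dom_card assms unfolding stepS_def by simp
qed

lemma adj_dom: "adj p q \<Longrightarrow> is_domino {p,q}"
  unfolding adj_def is_domino_def vertical_domino_def horizontal_domino_def
  by (cases p; cases q) (auto simp: insert_commute)

lemma adj_vert: "adj p q \<Longrightarrow> vertical_domino {p,q} \<longleftrightarrow> snd p = snd q"
  unfolding adj_def vertical_domino_def
  by (cases p; cases q) (auto simp: doubleton_eq_iff)

definition le2 :: "nat \<times> nat \<Rightarrow> nat \<times> nat \<Rightarrow> bool" where
  "le2 a b \<longleftrightarrow> fst a \<le> fst b \<and> snd a \<le> snd b"

lemma young_le2: "young S \<Longrightarrow> b \<in> S \<Longrightarrow> le2 a b \<Longrightarrow> a \<in> S"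
  unfolding le2_def by (cases a; cases b) (auto intro: young_down)

lemma geo:
  assumes "adj x z" "adj y z" "x \<noteq> y" "\<not> le2 x y" "\<not> le2 y x"
  shows "(\<exists>i j. x = (i, Suc j) \<and> y = (Suc i, j)) \<or> (\<exists>i j. y = (i, Suc j) \<and> x = (Suc i, j))"
  using assms unfolding adj_def le2_def
  by (cases x; cases y; cases z) auto

lemma up_pair:
  assumes yT: "young T" and yQ: "young Q" and x: "T - Q = {x}" and y: "Q - T = {y}"
    and l: "L \<in> upS T" "L \<in> upS Q"
  shows "\<exists>z. z \<notin> T \<and> z \<notin> Q \<and> L = T \<union> Q \<union> {z} \<and> L - T = {y,z} \<and> L - Q = {x,z} \<and> adj y z \<and> adj x z"
proof -
  have sT: "stepS T L" and sQ: "stepS Q L" using l unfolding upS_def by auto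
  have TL: "T \<subseteq> L" "is_domino (L - T)" using sT unfolding stepS_def by auto
  have QL: "Q \<subseteq> L" "is_domino (L - Q)" using sQ unfolding stepS_def by auto
  have "y \<in> L - T" using y QL by blast
  then obtain z where z: "L - T = {y,z}" "adj y z" using dom_other[OF TL(2)] by blast
  have "x \<in> L - Q" using x TL by blast
  then obtain z' where z': "L - Q = {x,z'}" "adj x z'" using dom_other[OF QL(2)] by blast
  have zT: "z \<notin> T" using z by blast
  have zy: "z \<noteq> y" using adj_neq[OF z(2)] by simp
  have zQ: "z \<notin> Q"
  proof
    assume "z \<in> Q" then have "z \<in> Q - T" using zT by blast
    then show False using y zy by blast
  qed
  have "z \<in> L" using z by blast
  then have "z \<in> {x,z'}" using z' zQ by blast
  moreover have "z \<noteq> x" using x zT by blast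
  ultimately have zz: "z = z'" by blast
  have "L = T \<union> {y,z}" using z TL by blast
  moreover have "Q \<subseteq> T \<union> {y}" using y by blast
  moreover have "y \<in> Q" using y by blast
  ultimately have "L = T \<union> Q \<union> {z}" by blast
  then show ?thesis using zT zQ z z' zz by blast
qed

lemma down_pair:
  assumes yT: "young T" and yQ: "young Q" and x: "T - Q = {x}" and y: "Q - T = {y}"
    and l: "N \<in> downS T" "N \<in> downS Q"
  shows "\<exists>w. w \<in> T \<and> w \<in> Q \<and> N = T - {x,w} \<and> T - N = {x,w} \<and> Q - N = {y,w} \<and> adj x w \<and> adj y w"
proof -
  have sT: "stepS N T" and sQ: "stepS N Q" using l unfolding downS_def by auto
  have TL: "N \<subseteq> T" "is_domino (T - N)" using sT unfolding stepS_def by auto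
  have QL: "N \<subseteq> Q" "is_domino (Q - N)" using sQ unfolding stepS_def by auto
  have "x \<in> T - N" using x QL by blast
  then obtain w where w: "T - N = {x,w}" "adj x w" using dom_other[OF TL(2)] by blast
  have "y \<in> Q - N" using y TL by blast
  then obtain w' where w': "Q - N = {y,w'}" "adj y w'" using dom_other[OF QL(2)] by blast
  have wT: "w \<in> T" "w \<notin> N" using w by blast+
  have wx: "w \<noteq> x" using adj_neq[OF w(2)] by simp
  have wQ: "w \<in> Q" using wT wx x by blast
  then have "w \<in> {y,w'}" using w' wT by blast
  moreover have "w \<noteq> y" using y wT by blast
  ultimately have ww: "w = w'" by blast
  have "N = T - {x,w}" using w TL by blast
  then show ?thesis using wT wQ w w' ww by blast
qed

lemma config1:
  assumes yT: "young T" and yQ: "young Q" and x: "T - Q = {(i, Suc j)}" and y: "Q - T = {(Suc i, j)}"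
  shows "upS T \<inter> upS Q = {T \<union> Q \<union> {(Suc i, Suc j)}}"
    and "downS T \<inter> downS Q = {T - {(i, Suc j), (i,j)}}"
    and "sv s T (T \<union> Q \<union> {(Suc i, Suc j)}) * sv s Q (T \<union> Q \<union> {(Suc i, Suc j)}) = s"
    and "sv s (T - {(i, Suc j), (i,j)}) T * sv s (T - {(i, Suc j), (i,j)}) Q = s"
proof -
  let ?x = "(i, Suc j)" and ?y = "(Suc i, j)" and ?z = "(Suc i, Suc j)" and ?w = "(i,j)"
  let ?L = "T \<union> Q \<union> {?z}" and ?N = "T - {?x, ?w}"
  have xT: "?x \<in> T" "?x \<notin> Q" and yQ': "?y \<in> Q" "?y \<notin> T" using x y by blast+
  have zT: "?z \<notin> T" using young_le2[OF yT, of ?z ?y] yQ' unfolding le2_def by auto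
  have zQ: "?z \<notin> Q" using young_le2[OF yQ, of ?z ?x] xT unfolding le2_def by auto
  have wT: "?w \<in> T" using young_le2[OF yT xT(1), of ?w] unfolding le2_def by auto
  have wQ: "?w \<in> Q" using young_le2[OF yQ yQ'(1), of ?w] unfolding le2_def by auto
  have yL: "young ?L"
    unfolding young_def
  proof (intro conjI allI impI)
    show "finite ?L" using yT yQ unfolding young_def by simp
  next
    fix a b a' b' assume ab: "(a,b) \<in> ?L" and le: "a' \<le> a" "b' \<le> b"
    show "(a',b') \<in> ?L"
    proof (cases "(a,b) \<in> T \<union> Q")
      case True
      then show ?thesis using young_down[OF yT _ le] young_down[OF yQ _ le] by blast
    next
      case False
      then have ab': "a = Suc i" "b = Suc j" using ab by auto
      show ?thesis
      proof (cases "a' = Suc i \<and> b' = Suc j")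
        case True then show ?thesis by simp
      next
        case False
        then have "a' \<le> i \<or> b' \<le> j" using le ab' by auto
        then show ?thesis
        proof
          assume "a' \<le> i"
          then have "(a',b') \<in> T" using young_down[OF yT xT(1), of a' b'] le ab' by auto
          then show ?thesis by blast
        next
          assume "b' \<le> j"
          then have "(a',b') \<in> Q" using young_down[OF yQ yQ'(1), of a' b'] le ab' by auto
          then show ?thesis by blast
        qed
      qed
    qed
  qed
  have LT: "?L - T = {?y, ?z}" using y zT by blast
  have LQ: "?L - Q = {?x, ?z}" using x zQ by blast
  have adj1: "adj ?y ?z" "adj ?x ?z" unfolding adj_def by auto
  have LinT: "?L \<in> upS T" unfolding upS_def stepS_def using yT yL LT adj_dom[OF adj1(1)] by auto
  have LinQ: "?L \<in> upS Q" unfolding upS_def stepS_def using yQ yL LQ adj_dom[OF adj1(2)] by auto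
  show "upS T \<inter> upS Q = {?L}"
  proof
    show "{?L} \<subseteq> upS T \<inter> upS Q" using LinT LinQ by blast
  next
    show "upS T \<inter> upS Q \<subseteq> {?L}"
    proof
      fix L assume "L \<in> upS T \<inter> upS Q"
      then obtain z where z: "z \<notin> T" "L = T \<union> Q \<union> {z}" "adj ?y z" "adj ?x z"
        using up_pair[OF yT yQ x y] by blast
      then have "z = ?z \<or> z = ?w" unfolding adj_def by (cases z) auto
      then have "z = ?z" using z(1) wT by blast
      then show "L \<in> {?L}" using z by simp
    qed
  qed
  have yN: "young ?N"
    unfolding young_def
  proof (intro conjI allI impI)
    show "finite ?N" using yT unfolding young_def by simp
  next
    fix a b a' b' assume ab: "(a,b) \<in> ?N" and le: "a' \<le> a" "b' \<le> b"
    have abQ: "(a,b) \<in> Q" using ab x by blast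
    have a'T: "(a',b') \<in> T" using young_down[OF yT _ le] ab by blast
    have nx: "(a',b') \<noteq> ?x"
    proof
      assume "(a',b') = ?x"
      then have "?x \<in> Q" using young_down[OF yQ abQ le] by simp
      then show False using xT by blast
    qed
    have nw: "(a',b') \<noteq> ?w"
    proof
      assume e: "(a',b') = ?w"
      have "(a,b) \<noteq> ?w" using ab by blast
      then have "Suc i \<le> a \<or> Suc j \<le> b" using le e by auto
      then show False
      proof
        assume "Suc i \<le> a"
        then have "?y \<in> T" using young_down[OF yT, of a b "Suc i" j] ab le e by auto
        then show False using yQ' by blast
      next
        assume "Suc j \<le> b"
        then have "?x \<in> Q" using young_down[OF yQ abQ, of i "Suc j"] le e by auto
        then show False using xT by blast
      qed
    qed
    show "(a',b') \<in> ?N" using a'T nx nw by blast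
  qed
  have TN: "T - ?N = {?x, ?w}" using xT wT by blast
  have QN: "Q - ?N = {?y, ?w}" using x y wQ xT by blast
  have adj2: "adj ?x ?w" "adj ?y ?w" unfolding adj_def by auto
  have NT: "?N \<in> downS T" unfolding downS_def stepS_def using yT yN TN adj_dom[OF adj2(1)] by auto
  have NQ: "?N \<in> downS Q" unfolding downS_def stepS_def using yQ yN QN adj_dom[OF adj2(2)] x by auto
  show "downS T \<inter> downS Q = {?N}"
  proof
    show "{?N} \<subseteq> downS T \<inter> downS Q" using NT NQ by blast
  next
    show "downS T \<inter> downS Q \<subseteq> {?N}"
    proof
      fix N assume "N \<in> downS T \<inter> downS Q"
      then obtain w where w: "w \<in> T" "N = T - {?x,w}" "adj ?x w" "adj ?y w"
        using down_pair[OF yT yQ x y] by blast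
      then have "w = ?z \<or> w = ?w" unfolding adj_def by (cases w) auto
      then have "w = ?w" using w(1) zT by blast
      then show "N \<in> {?N}" using w by simp
    qed
  qed
  have v1: "\<not> vertical_domino {?y, ?z}" using adj_vert[OF adj1(1)] by simp
  have v2: "vertical_domino {?x, ?z}" using adj_vert[OF adj1(2)] by simp
  show "sv s T ?L * sv s Q ?L = s" unfolding sv_def LT LQ using v1 v2 by simp
  have v3: "\<not> vertical_domino {?x, ?w}" using adj_vert[OF adj2(1)] by simp
  have v4: "vertical_domino {?y, ?w}" using adj_vert[OF adj2(2)] by simp
  show "sv s ?N T * sv s ?N Q = s" unfolding sv_def TN QN using v3 v4 by simp
qed

definition Kup where "Kup s T Q = (\<Sum>L\<in>upS T \<inter> upS Q. sv s T L * sv s Q L)"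
definition Kdn where "Kdn s T Q = (\<Sum>N\<in>downS T \<inter> downS Q. sv s N T * sv s N Q)"

lemma Kup_sym: "Kup s T Q = Kup s Q T" unfolding Kup_def by (simp add: Int_commute mult.commute)
lemma Kdn_sym: "Kdn s T Q = Kdn s Q T" unfolding Kdn_def by (simp add: Int_commute mult.commute)

lemma offdiag:
  assumes yT: "young T" and yQ: "young Q" and ne: "T \<noteq> Q" and cc: "card T = card Q"
  shows "Kup s T Q = Kdn s T Q"
proof -
  have fT: "finite T" and fQ: "finite Q" using yT yQ young_finite by auto
  have cUI: "card T + card Q = card (T \<union> Q) + card (T \<inter> Q)" using card_Un_Int[OF fT fQ] .
  have cI: "card (T \<inter> Q) < card T"
  proof (rule ccontr)
    assume "\<not> ?thesis"
    then have "card T \<le> card (T \<inter> Q)" by simp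
    then have "T \<inter> Q = T" using card_seteq[OF fT, of "T \<inter> Q"] by blast
    then have "T \<subseteq> Q" by blast
    then have "T = Q" using card_subset_eq[OF fQ _ cc] by blast
    then show False using ne by simp
  qed
  have cTQ: "card (T - Q) = card T - card (T \<inter> Q)" using card_Diff_subset_Int[of T Q] fT by simp
  have cQT: "card (Q - T) = card Q - card (T \<inter> Q)" using card_Diff_subset_Int[of Q T] fQ
    by (simp add: Int_commute)
  consider (a) "card (T \<inter> Q) + 3 \<le> card T" | (b) "card (T \<inter> Q) + 2 = card T"
    | (c) "card (T \<inter> Q) + 1 = card T" using cI by linarith
  then show ?thesis
  proof cases
    case a
    have "upS T \<inter> upS Q = {}"
    proof (rule ccontr)
      assume "upS T \<inter> upS Q \<noteq> {}"
      then obtain L where L: "stepS T L" "stepS Q L" unfolding upS_def by blast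
      then have "T \<union> Q \<subseteq> L" "finite L" unfolding stepS_def young_def by auto
      then have "card (T \<union> Q) \<le> card L" by (simp add: card_mono)
      moreover have "card L = card T + 2" using stepS_card[OF L(1)] by simp
      ultimately show False using cUI cc a by linarith
    qed
    moreover have "downS T \<inter> downS Q = {}"
    proof (rule ccontr)
      assume "downS T \<inter> downS Q \<noteq> {}"
      then obtain N where N: "stepS N T" "stepS N Q" unfolding downS_def by blast
      then have "N \<subseteq> T \<inter> Q" unfolding stepS_def by auto
      then have "card N \<le> card (T \<inter> Q)" using fT by (simp add: card_mono)
      moreover have "card T = card N + 2" using stepS_card[OF N(1)] by simp
      ultimately show False using a by linarith
    qed
    ultimately show ?thesis unfolding Kup_def Kdn_def by simp
  next
    case b
    have sub1: "upS T \<inter> upS Q \<subseteq> {T \<union> Q}"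
    proof
      fix L assume "L \<in> upS T \<inter> upS Q"
      then have L: "stepS T L" "stepS Q L" unfolding upS_def by auto
      then have "T \<union> Q \<subseteq> L" "finite L" unfolding stepS_def young_def by auto
      moreover have "card L = card T + 2" using stepS_card[OF L(1)] by simp
      ultimately have "T \<union> Q = L" using card_seteq[of L "T \<union> Q"] cUI cc b by simp
      then show "L \<in> {T \<union> Q}" by simp
    qed
    have sub2: "downS T \<inter> downS Q \<subseteq> {T \<inter> Q}"
    proof
      fix N assume "N \<in> downS T \<inter> downS Q"
      then have N: "stepS N T" "stepS N Q" unfolding downS_def by auto
      then have "N \<subseteq> T \<inter> Q" unfolding stepS_def by auto
      moreover have "card T = card N + 2" using stepS_card[OF N(1)] by simp
      ultimately have "N = T \<inter> Q" using card_seteq[of "T \<inter> Q" N] fT b by simp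
      then show "N \<in> {T \<inter> Q}" by simp
    qed
    have yU: "young (T \<union> Q)" and yI: "young (T \<inter> Q)" using young_Un young_Int yT yQ by auto
    have e1: "(T \<union> Q) - T = Q - T" "(T \<union> Q) - Q = T - Q" "T - (T \<inter> Q) = T - Q" "Q - (T \<inter> Q) = Q - T" by auto
    have m1: "T \<union> Q \<in> upS T \<longleftrightarrow> is_domino (Q - T)" unfolding upS_def stepS_def using yT yU e1 by auto
    have m2: "T \<union> Q \<in> upS Q \<longleftrightarrow> is_domino (T - Q)" unfolding upS_def stepS_def using yQ yU e1 by auto
    have m3: "T \<inter> Q \<in> downS T \<longleftrightarrow> is_domino (T - Q)" unfolding downS_def stepS_def using yT yI e1 by auto
    have m4: "T \<inter> Q \<in> downS Q \<longleftrightarrow> is_domino (Q - T)" unfolding downS_def stepS_def using yQ yI e1 by auto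
    show ?thesis
    proof (cases "is_domino (Q - T) \<and> is_domino (T - Q)")
      case True
      then have "upS T \<inter> upS Q = {T \<union> Q}" "downS T \<inter> downS Q = {T \<inter> Q}"
        using sub1 sub2 m1 m2 m3 m4 by blast+
      then show ?thesis unfolding Kup_def Kdn_def sv_def using e1 by simp
    next
      case False
      then have "upS T \<inter> upS Q = {}" "downS T \<inter> downS Q = {}"
        using sub1 sub2 m1 m2 m3 m4 by blast+
      then show ?thesis unfolding Kup_def Kdn_def by simp
    qed
  next
    case c
    have "card (T - Q) = 1" "card (Q - T) = 1" using cTQ cQT c cc by auto
    then obtain x y where x: "T - Q = {x}" and y: "Q - T = {y}" by (meson card_1_singletonE)
    have xy: "x \<noteq> y" and nxy: "\<not> le2 x y" and nyx: "\<not> le2 y x"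
      using x y young_le2[OF yQ, of y x] young_le2[OF yT, of x y] by blast+
    consider (o1) "\<exists>i j. x = (i, Suc j) \<and> y = (Suc i, j)" | (o2) "\<exists>i j. y = (i, Suc j) \<and> x = (Suc i, j)"
      | (o3) "\<not> (\<exists>i j. x = (i, Suc j) \<and> y = (Suc i, j))" "\<not> (\<exists>i j. y = (i, Suc j) \<and> x = (Suc i, j))"
      by blast
    then show ?thesis
    proof cases
      case o1
      then obtain i j where "x = (i, Suc j)" "y = (Suc i, j)" by blast
      then show ?thesis unfolding Kup_def Kdn_def using config1(1,2)[OF yT yQ, of i j] config1(3,4)[OF yT yQ, of i j s] x y by simp
    next
      case o2
      then obtain i j where "y = (i, Suc j)" "x = (Suc i, j)" by blast
      then have "Kup s Q T = Kdn s Q T" unfolding Kup_def Kdn_def using config1(1,2)[OF yQ yT, of i j] config1(3,4)[OF yQ yT, of i j s] x y by simp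
      then show ?thesis using Kup_sym Kdn_sym by metis
    next
      case o3
      have "upS T \<inter> upS Q = {}"
      proof (rule ccontr)
        assume "upS T \<inter> upS Q \<noteq> {}"
        then obtain L where "L \<in> upS T" "L \<in> upS Q" by blast
        then obtain z where "adj y z" "adj x z" using up_pair[OF yT yQ x y] by blast
        then show False using geo[of x z y] xy nxy nyx o3 by blast
      qed
      moreover have "downS T \<inter> downS Q = {}"
      proof (rule ccontr)
        assume "downS T \<inter> downS Q \<noteq> {}"
        then obtain N where "N \<in> downS T" "N \<in> downS Q" by blast
        then obtain w where "adj x w" "adj y w" using down_pair[OF yT yQ x y] by blast
        then show False using geo[of x w y] xy nxy nyx o3 by blast
      qed
      ultimately show ?thesis unfolding Kup_def Kdn_def by simp
    qed
  qed
qed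

definition YS :: "nat \<Rightarrow> (nat \<times> nat) set set" where
  "YS k = {S. young S \<and> card S = k}"

lemma finite_YS: "finite (YS k)"
proof -
  have "YS k \<subseteq> Pow ({..<k} \<times> {..<k})"
  proof
    fix S assume "S \<in> YS k"
    then have y: "young S" and c: "card S = k" unfolding YS_def by auto
    have f: "finite S" using y young_finite by auto
    have "S \<subseteq> {..<k} \<times> {..<k}"
    proof
      fix p assume "p \<in> S"
      obtain i j where p: "p = (i,j)" by (cases p)
      have "(\<lambda>i'. (i',j)) ` {..i} \<subseteq> S" using young_down[OF y] \<open>p \<in> S\<close> p by auto
      then have "card ((\<lambda>i'. (i',j)) ` {..i}) \<le> k" using c f card_mono by metis
      moreover have "card ((\<lambda>i'. (i',j)) ` {..i}) = Suc i" by (simp add: card_image inj_on_def)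
      ultimately have "i < k" by simp
      have "(\<lambda>j'. (i,j')) ` {..j} \<subseteq> S" using young_down[OF y] \<open>p \<in> S\<close> p by auto
      then have "card ((\<lambda>j'. (i,j')) ` {..j}) \<le> k" using c f card_mono by metis
      moreover have "card ((\<lambda>j'. (i,j')) ` {..j}) = Suc j" by (simp add: card_image inj_on_def)
      ultimately have "j < k" by simp
      show "p \<in> {..<k} \<times> {..<k}" using p \<open>i < k\<close> \<open>j < k\<close> by simp
    qed
    then show "S \<in> Pow ({..<k} \<times> {..<k})" by simp
  qed
  then show ?thesis using finite_subset by blast
qed

lemma downS_young: "P \<in> downS S \<Longrightarrow> young P \<and> young S \<and> card S = card P + 2"
  unfolding downS_def using stepS_card stepS_def by blast
lemma upS_young: "P \<in> upS S \<Longrightarrow> young P \<and> young S \<and> card P = card S + 2"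
  unfolding upS_def using stepS_card stepS_def by blast

lemma finite_downS_any: "finite (downS S)"
proof (cases "young S")
  case True then show ?thesis using fin_downS by blast
next
  case False then have "downS S = {}" unfolding downS_def stepS_def by auto
  then show ?thesis by simp
qed

fun fS :: "(nat \<times> nat) set \<Rightarrow> complex \<Rightarrow> nat \<Rightarrow> (nat \<times> nat) set \<Rightarrow> complex" where
  "fS D0 s 0 S = (if S = D0 then 1 else 0)"
| "fS D0 s (Suc n) S = (\<Sum>P\<in>downS S. sv s P S * fS D0 s n P)"

lemma fS_nz: assumes "young D0" shows "fS D0 s n S \<noteq> 0 \<Longrightarrow> young S \<and> card S = card D0 + 2 * n"
proof (induction n arbitrary: S)
  case 0 then show ?case using assms by (simp split: if_splits)
next
  case (Suc n)
  then obtain P where P: "P \<in> downS S" "sv s P S * fS D0 s n P \<noteq> 0"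
    by (metis (no_types, lifting) fS.simps(2) sum.neutral)
  then have "fS D0 s n P \<noteq> 0" by auto
  then have "young P \<and> card P = card D0 + 2 * n" using Suc.IH by blast
  then show ?case using downS_young[OF P(1)] by simp
qed

lemma sum_sub_if: assumes "finite A" "B \<subseteq> A" shows "sum g B = (\<Sum>x\<in>A. if x \<in> B then g x else 0)"
proof -
  have "A \<inter> B = B" using assms(2) by blast
  then show ?thesis using sum.inter_restrict[OF assms(1), of g B] by simp
qed

lemma swap_up_down:
  assumes y: "young T"
  shows "(\<Sum>P\<in>upS T. sv s T P * (\<Sum>Q\<in>downS P. sv s Q P * F Q)) = (\<Sum>Q\<in>YS (card T). F Q * Kup s T Q)"
proof -
  have "(\<Sum>P\<in>upS T. sv s T P * (\<Sum>Q\<in>downS P. sv s Q P * F Q)) =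
        (\<Sum>P\<in>upS T. \<Sum>Q\<in>YS (card T). if Q \<in> downS P then sv s T P * sv s Q P * F Q else 0)"
  proof (rule sum.cong[OF refl])
    fix P assume P: "P \<in> upS T"
    have sub: "downS P \<subseteq> YS (card T)" using upS_young[OF P] downS_young unfolding YS_def by fastforce
    have "sv s T P * (\<Sum>Q\<in>downS P. sv s Q P * F Q) = (\<Sum>Q\<in>downS P. sv s T P * sv s Q P * F Q)"
      by (simp add: sum_distrib_left mult.assoc)
    also have "\<dots> = (\<Sum>Q\<in>YS (card T). if Q \<in> downS P then sv s T P * sv s Q P * F Q else 0)"
      by (rule sum_sub_if[OF finite_YS sub])
    finally show "sv s T P * (\<Sum>Q\<in>downS P. sv s Q P * F Q) = \<dots>" .
  qed
  also have "\<dots> = (\<Sum>Q\<in>YS (card T). \<Sum>P\<in>upS T. if Q \<in> downS P then sv s T P * sv s Q P * F Q else 0)"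
    by (rule sum.swap)
  also have "\<dots> = (\<Sum>Q\<in>YS (card T). F Q * Kup s T Q)"
  proof (rule sum.cong[OF refl])
    fix Q assume "Q \<in> YS (card T)"
    have "(\<Sum>P\<in>upS T. if Q \<in> downS P then sv s T P * sv s Q P * F Q else 0) =
          (\<Sum>P\<in>upS T. if P \<in> upS Q then sv s T P * sv s Q P * F Q else 0)"
      unfolding upS_def downS_def by simp
    also have "\<dots> = (\<Sum>P\<in>upS T \<inter> upS Q. sv s T P * sv s Q P * F Q)"
      by (rule sum.inter_restrict[symmetric]) (rule fin_upS[OF y])
    also have "\<dots> = F Q * Kup s T Q" unfolding Kup_def by (simp add: sum_distrib_left mult_ac)
    finally show "(\<Sum>P\<in>upS T. if Q \<in> downS P then sv s T P * sv s Q P * F Q else 0) = F Q * Kup s T Q" .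
  qed
  finally show ?thesis .
qed

lemma swap_down_up:
  assumes y: "young T"
  shows "(\<Sum>N\<in>downS T. sv s N T * (\<Sum>Q\<in>upS N. sv s N Q * F Q)) = (\<Sum>Q\<in>YS (card T). F Q * Kdn s T Q)"
proof -
  have "(\<Sum>N\<in>downS T. sv s N T * (\<Sum>Q\<in>upS N. sv s N Q * F Q)) =
        (\<Sum>N\<in>downS T. \<Sum>Q\<in>YS (card T). if Q \<in> upS N then sv s N T * sv s N Q * F Q else 0)"
  proof (rule sum.cong[OF refl])
    fix N assume N: "N \<in> downS T"
    have sub: "upS N \<subseteq> YS (card T)" using downS_young[OF N] upS_young unfolding YS_def by fastforce
    have "sv s N T * (\<Sum>Q\<in>upS N. sv s N Q * F Q) = (\<Sum>Q\<in>upS N. sv s N T * sv s N Q * F Q)"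
      by (simp add: sum_distrib_left mult.assoc)
    also have "\<dots> = (\<Sum>Q\<in>YS (card T). if Q \<in> upS N then sv s N T * sv s N Q * F Q else 0)"
      by (rule sum_sub_if[OF finite_YS sub])
    finally show "sv s N T * (\<Sum>Q\<in>upS N. sv s N Q * F Q) = \<dots>" .
  qed
  also have "\<dots> = (\<Sum>Q\<in>YS (card T). \<Sum>N\<in>downS T. if Q \<in> upS N then sv s N T * sv s N Q * F Q else 0)"
    by (rule sum.swap)
  also have "\<dots> = (\<Sum>Q\<in>YS (card T). F Q * Kdn s T Q)"
  proof (rule sum.cong[OF refl])
    fix Q assume "Q \<in> YS (card T)"
    have "(\<Sum>N\<in>downS T. if Q \<in> upS N then sv s N T * sv s N Q * F Q else 0) =
          (\<Sum>N\<in>downS T. if N \<in> downS Q then sv s N T * sv s N Q * F Q else 0)"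
      unfolding upS_def downS_def by simp
    also have "\<dots> = (\<Sum>N\<in>downS T \<inter> downS Q. sv s N T * sv s N Q * F Q)"
      by (rule sum.inter_restrict[symmetric]) (rule fin_downS[OF y])
    also have "\<dots> = F Q * Kdn s T Q" unfolding Kdn_def by (simp add: sum_distrib_left mult_ac)
    finally show "(\<Sum>N\<in>downS T. if Q \<in> upS N then sv s N T * sv s N Q * F Q else 0) = F Q * Kdn s T Q" .
  qed
  finally show ?thesis .
qed

lemma Kup_Kdn: assumes yT: "young T" and Q: "Q \<in> YS (card T)"
  shows "Kup s T Q = Kdn s T Q + (if Q = T then 1 + s^2 else 0)"
proof (cases "Q = T")
  case True
  then show ?thesis unfolding Kup_def Kdn_def using diag_identity[OF yT, of s] by simp
next
  case False
  then show ?thesis using offdiag[OF yT _ _, of Q s] Q unfolding YS_def by auto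
qed

lemma T_in_YS: "young T \<Longrightarrow> T \<in> YS (card T)" unfolding YS_def by simp

definition gS where "gS D0 s n T = (\<Sum>P\<in>upS T. sv s T P * fS D0 s n P)"

lemma gS_0: assumes "downS D0 = {}" shows "gS D0 s 0 T = 0"
proof -
  have "D0 \<notin> upS T" using assms unfolding upS_def downS_def by auto
  then show ?thesis unfolding gS_def by (auto intro: sum.neutral)
qed

lemma gS_rec: assumes yT: "young T"
  shows "gS D0 s (Suc m) T = (1 + s^2) * fS D0 s m T + (\<Sum>N\<in>downS T. sv s N T * gS D0 s m N)"
proof -
  have "gS D0 s (Suc m) T = (\<Sum>Q\<in>YS (card T). fS D0 s m Q * Kup s T Q)"
    unfolding gS_def fS.simps by (rule swap_up_down[OF yT])
  also have "\<dots> = (\<Sum>Q\<in>YS (card T). fS D0 s m Q * Kdn s T Q + (if Q = T then (1 + s^2) * fS D0 s m T else 0))"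
    by (rule sum.cong[OF refl]) (simp add: Kup_Kdn[OF yT] algebra_simps)
  also have "\<dots> = (\<Sum>Q\<in>YS (card T). fS D0 s m Q * Kdn s T Q) + (1 + s^2) * fS D0 s m T"
    using T_in_YS[OF yT] finite_YS by (simp add: sum.distrib)
  also have "(\<Sum>Q\<in>YS (card T). fS D0 s m Q * Kdn s T Q) = (\<Sum>N\<in>downS T. sv s N T * gS D0 s m N)"
    unfolding gS_def by (rule swap_down_up[OF yT, symmetric])
  finally show ?thesis by simp
qed

lemma gS_closed: assumes d0: "downS D0 = {}" and yT: "young T"
  shows "gS D0 s (Suc m) T = of_nat (Suc m) * (1 + s^2) * fS D0 s m T"
  using yT
proof (induction m arbitrary: T)
  case 0
  then show ?case using gS_rec[OF 0] gS_0[OF d0] by simp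
next
  case (Suc m)
  have "(\<Sum>N\<in>downS T. sv s N T * gS D0 s (Suc m) N) = (\<Sum>N\<in>downS T. of_nat (Suc m) * (1 + s^2) * (sv s N T * fS D0 s m N))"
    by (rule sum.cong[OF refl]) (use Suc.IH downS_young in auto)
  also have "\<dots> = of_nat (Suc m) * (1 + s^2) * fS D0 s (Suc m) T"
    by (simp add: sum_distrib_left)
  finally show ?case using gS_rec[OF Suc.prems, of D0 s "Suc m"] by (simp add: algebra_simps)
qed

lemma swap_levels:
  "(\<Sum>S\<in>YS (k+2). \<Sum>P\<in>downS S. G P S) = (\<Sum>P\<in>YS k. \<Sum>S\<in>upS P. G P S)"
proof -
  have "(\<Sum>S\<in>YS (k+2). \<Sum>P\<in>downS S. G P S) = (\<Sum>S\<in>YS (k+2). \<Sum>P\<in>YS k. if stepS P S then G P S else 0)"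
  proof (rule sum.cong[OF refl])
    fix S assume S: "S \<in> YS (k+2)"
    have sub: "downS S \<subseteq> YS k" using S downS_young unfolding YS_def by fastforce
    show "(\<Sum>P\<in>downS S. G P S) = (\<Sum>P\<in>YS k. if stepS P S then G P S else 0)"
      using sum_sub_if[OF finite_YS sub, of "\<lambda>P. G P S"] unfolding downS_def by simp
  qed
  also have "\<dots> = (\<Sum>P\<in>YS k. \<Sum>S\<in>YS (k+2). if stepS P S then G P S else 0)" by (rule sum.swap)
  also have "\<dots> = (\<Sum>P\<in>YS k. \<Sum>S\<in>upS P. G P S)"
  proof (rule sum.cong[OF refl])
    fix P assume P: "P \<in> YS k"
    have sub: "upS P \<subseteq> YS (k+2)" using P upS_young unfolding YS_def by fastforce
    show "(\<Sum>S\<in>YS (k+2). if stepS P S then G P S else 0) = (\<Sum>S\<in>upS P. G P S)"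
      using sum_sub_if[OF finite_YS sub, of "\<lambda>S. G P S"] unfolding upS_def by simp
  qed
  finally show ?thesis .
qed

lemma sum_if_eq: assumes "finite A" "a \<in> A" shows "(\<Sum>x\<in>A. if x = a then v else 0) = v"
proof -
  have "(\<Sum>x\<in>A. if x = a then v else 0) = (if a = a then v else 0) + (\<Sum>x\<in>A - {a}. if x = a then v else 0)"
    using sum.remove[OF assms] .
  also have "(\<Sum>x\<in>A - {a}. if x = a then v else 0) = 0" by (rule sum.neutral) auto
  finally show ?thesis by simp
qed

definition HS where "HS D0 x y c s n = (\<Sum>S\<in>YS (card D0 + 2 * n). wt x y c S * fS D0 s n S)"

lemma HS_0: assumes "young D0" shows "HS D0 x y c s 0 = wt x y c D0"
proof -
  have "D0 \<in> YS (card D0)" using assms unfolding YS_def by simp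
  have "HS D0 x y c s 0 = (\<Sum>S\<in>YS (card D0). if S = D0 then wt x y c D0 else 0)"
    unfolding HS_def by (rule sum.cong) auto
  also have "\<dots> = wt x y c D0"
    using sum_if_eq[OF finite_YS \<open>D0 \<in> YS (card D0)\<close>] .
  finally show ?thesis .
qed

definition T2 where "T2 D0 x y c s n = (\<Sum>P\<in>YS (card D0 + 2 * n). fS D0 s n P * (\<Sum>Q\<in>downS P. sv s Q P * wt x y c Q))"

lemma HS_Suc: "HS D0 x y c s (Suc n) = (y^2 + x^2 * s) * HS D0 x y c s n + c * T2 D0 x y c s n"
proof -
  let ?N = "card D0 + 2 * n"
  have "HS D0 x y c s (Suc n) = (\<Sum>S\<in>YS (?N + 2). \<Sum>P\<in>downS S. wt x y c S * sv s P S * fS D0 s n P)"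
    unfolding HS_def by (simp add: sum_distrib_left mult_ac)
  also have "\<dots> = (\<Sum>P\<in>YS ?N. \<Sum>S\<in>upS P. wt x y c S * sv s P S * fS D0 s n P)"
    by (rule swap_levels)
  also have "\<dots> = (\<Sum>P\<in>YS ?N. fS D0 s n P * ((y^2 + x^2 * s) * wt x y c P + c * (\<Sum>Q\<in>downS P. sv s Q P * wt x y c Q)))"
  proof (rule sum.cong[OF refl])
    fix P assume "P \<in> YS ?N"
    then have y: "young P" unfolding YS_def by simp
    have "(\<Sum>S\<in>upS P. wt x y c S * sv s P S * fS D0 s n P) = fS D0 s n P * (\<Sum>S\<in>upS P. sv s P S * wt x y c S)"
      by (simp add: sum_distrib_left mult_ac)
    then show "(\<Sum>S\<in>upS P. wt x y c S * sv s P S * fS D0 s n P) = fS D0 s n P * ((y^2 + x^2 * s) * wt x y c P + c * (\<Sum>Q\<in>downS P. sv s Q P * wt x y c Q))"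
      using L_identity[OF y, of s x y c] by simp
  qed
  also have "\<dots> = (y^2 + x^2 * s) * HS D0 x y c s n + c * T2 D0 x y c s n"
    unfolding HS_def T2_def by (simp add: algebra_simps sum.distrib sum_distrib_left)
  finally show ?thesis .
qed

lemma T2_0: assumes "young D0" "downS D0 = {}" shows "T2 D0 x y c s 0 = 0"
proof -
  have "T2 D0 x y c s 0 = (\<Sum>S\<in>YS (card D0). 0)"
    unfolding T2_def using assms(2) by (intro sum.cong) auto
  then show ?thesis by simp
qed

lemma T2_Suc: assumes d0: "downS D0 = {}"
  shows "T2 D0 x y c s (Suc m) = of_nat (Suc m) * (1 + s^2) * HS D0 x y c s m"
proof -
  let ?M = "card D0 + 2 * m"
  have "T2 D0 x y c s (Suc m) = (\<Sum>P\<in>YS (?M + 2). \<Sum>Q\<in>downS P. fS D0 s (Suc m) P * sv s Q P * wt x y c Q)"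
  proof -
    have eq: "card D0 + 2 * Suc m = ?M + 2" by simp
    show ?thesis unfolding T2_def eq by (rule sum.cong[OF refl]) (simp only: sum_distrib_left mult.assoc)
  qed
  also have "\<dots> = (\<Sum>Q\<in>YS ?M. \<Sum>P\<in>upS Q. fS D0 s (Suc m) P * sv s Q P * wt x y c Q)"
    by (rule swap_levels)
  also have "\<dots> = (\<Sum>Q\<in>YS ?M. wt x y c Q * gS D0 s (Suc m) Q)"
    unfolding gS_def by (rule sum.cong[OF refl]) (simp add: sum_distrib_left mult_ac)
  also have "\<dots> = (\<Sum>Q\<in>YS ?M. of_nat (Suc m) * (1 + s^2) * (wt x y c Q * fS D0 s m Q))"
    by (rule sum.cong[OF refl]) (simp add: gS_closed[OF d0] YS_def)
  also have "\<dots> = of_nat (Suc m) * (1 + s^2) * HS D0 x y c s m"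
    unfolding HS_def by (simp add: sum_distrib_left)
  finally show ?thesis .
qed

lemma mem_cells: "(i,j) \<in> cells lam \<longleftrightarrow> i < length lam \<and> j < lam ! i"
  unfolding cells_def by simp

lemma part_mono: "is_partition lam \<Longrightarrow> i \<le> i' \<Longrightarrow> i' < length lam \<Longrightarrow> lam ! i' \<le> lam ! i"
  unfolding is_partition_def
  by (metis le_eq_less_or_eq sorted_wrt_nth_less order_refl)

lemma part_pos: "is_partition lam \<Longrightarrow> i < length lam \<Longrightarrow> 0 < lam ! i"
  unfolding is_partition_def by (metis gr0I nth_mem)

lemma rowlen_cells: "rowlen (cells lam) i = (if i < length lam then lam ! i else 0)"
  by (rule rowlen_eq_card_lt) (simp add: mem_cells)

lemma cells_Sigma: "cells lam = (SIGMA i:{..<length lam}. {..<lam ! i})"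
  unfolding cells_def by auto

lemma finite_cells: "finite (cells lam)"
  unfolding cells_Sigma by simp

lemma card_cells: "card (cells lam) = sum_list lam"
  unfolding cells_Sigma by (simp add: sum_list_sum_nth atLeast0LessThan)

lemma young_cells: assumes "is_partition lam" shows "young (cells lam)"
  unfolding young_def
proof (intro conjI allI impI)
  show "finite (cells lam)" by (rule finite_cells)
next
  fix i j i' j' assume "(i,j) \<in> cells lam" "i' \<le> i" "j' \<le> j"
  then show "(i',j') \<in> cells lam" using part_mono[OF assms, of i' i] unfolding mem_cells by auto
qed

lemma cells_inj: assumes p: "is_partition lam" "is_partition mu" and e: "cells lam = cells mu"
  shows "lam = mu"
proof -
  have l1: "i < length lam \<longleftrightarrow> (i,0) \<in> cells lam" for i
    using part_pos[OF p(1), of i] unfolding mem_cells by blast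
  have l2: "i < length mu \<longleftrightarrow> (i,0) \<in> cells mu" for i
    using part_pos[OF p(2), of i] unfolding mem_cells by blast
  have len: "i < length lam \<longleftrightarrow> i < length mu" for i
    using l1 l2 e by simp
  have "length lam = length mu"
    using len[of "length lam"] len[of "length mu"] by linarith
  moreover have "lam ! i = mu ! i" if "i < length lam" for i
    using rowlen_cells[of lam i] rowlen_cells[of mu i] e len that by simp
  ultimately show ?thesis by (rule nth_equalityI)
qed

definition to_list :: "(nat \<times> nat) set \<Rightarrow> nat list" where
  "to_list S = map (rowlen S) [0..<rowlen (tr S) 0]"

lemma to_list_props: assumes y: "young S" shows "is_partition (to_list S)" "cells (to_list S) = S"
proof -
  have row_pos: "0 < rowlen S i \<longleftrightarrow> i < rowlen (tr S) 0" for i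
  proof -
    have a: "(i,0) \<in> S \<longleftrightarrow> 0 < rowlen S i" using young_row_iff[OF y, of i 0] .
    have yt: "young (tr S)" using y by simp
    have b: "(0,i) \<in> tr S \<longleftrightarrow> i < rowlen (tr S) 0" using young_row_iff[OF yt, of 0 i] .
    have c: "(0,i) \<in> tr S \<longleftrightarrow> (i,0) \<in> S" by (rule mem_tr)
    show ?thesis using a b c by blast
  qed
  show "is_partition (to_list S)"
    unfolding is_partition_def to_list_def
  proof
    show "sorted_wrt (\<ge>) (map (rowlen S) [0..<rowlen (tr S) 0])"
      unfolding sorted_wrt_iff_nth_less
    proof (intro allI impI)
      fix i j :: nat assume "i < j" "j < length (map (rowlen S) [0..<rowlen (tr S) 0])"
      then show "map (rowlen S) [0..<rowlen (tr S) 0] ! j \<le> map (rowlen S) [0..<rowlen (tr S) 0] ! i"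
        using rowlen_mono[OF y, of i j] by simp
    qed
    show "0 \<notin> set (map (rowlen S) [0..<rowlen (tr S) 0])"
    proof
      assume "0 \<in> set (map (rowlen S) [0..<rowlen (tr S) 0])"
      then obtain i where "i < rowlen (tr S) 0" "rowlen S i = 0" by auto
      then show False using row_pos[of i] by simp
    qed
  qed
  show "cells (to_list S) = S"
  proof (rule set_eqI)
    fix p :: "nat \<times> nat"
    obtain i j where p: "p = (i,j)" by (cases p)
    have "(i,j) \<in> cells (to_list S) \<longleftrightarrow> i < rowlen (tr S) 0 \<and> j < rowlen S i"
      unfolding mem_cells to_list_def by auto
    also have "\<dots> \<longleftrightarrow> j < rowlen S i" using row_pos[of i] by auto
    also have "\<dots> \<longleftrightarrow> (i,j) \<in> S" using young_row_iff[OF y] by simp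
    finally show "p \<in> cells (to_list S) \<longleftrightarrow> p \<in> S" using p by simp
  qed
qed

lemma to_list_cells: "is_partition lam \<Longrightarrow> to_list (cells lam) = lam"
  using cells_inj to_list_props young_cells by metis

lemma dom_step_iff: "dom_step mu lam \<longleftrightarrow> is_partition mu \<and> is_partition lam \<and> stepS (cells mu) (cells lam)"
  unfolding dom_step_def stepS_def using young_cells by blast

lemma odd_parts_orow: "odd_parts lam = orow (cells lam)"
proof -
  have "{i. odd (rowlen (cells lam) i)} = {i. i < length lam \<and> odd (lam ! i)}"
    unfolding rowlen_cells by auto
  then show ?thesis unfolding odd_parts_def orow_def length_filter_conv_card by simp
qed

lemma cells_conj: assumes p: "is_partition lam" shows "cells (conj_part lam) = tr (cells lam)"
proof (rule set_eqI)
  fix q :: "nat \<times> nat"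
  obtain j i where q: "q = (j,i)" by (cases q)
  have y: "young (cells lam)" using young_cells[OF p] .
  have hd0: "lam \<noteq> [] \<Longrightarrow> hd lam = lam ! 0" by (simp add: hd_conv_nth)
  have rl: "card {i. i < length lam \<and> j < lam ! i} = rowlen (tr (cells lam)) j"
    unfolding rowlen_def by (simp add: mem_cells)
  have "(j,i) \<in> cells (conj_part lam) \<longleftrightarrow> j < (if lam = [] then 0 else hd lam) \<and> i < rowlen (tr (cells lam)) j"
    unfolding mem_cells conj_part_def using rl by auto
  also have "\<dots> \<longleftrightarrow> j < (if lam = [] then 0 else hd lam) \<and> (i,j) \<in> cells lam"
    using young_row_iff[of "tr (cells lam)" j i] y by simp
  also have "\<dots> \<longleftrightarrow> (i,j) \<in> cells lam"
  proof
    assume "(i,j) \<in> cells lam"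
    then have "i < length lam" "j < lam ! i" unfolding mem_cells by auto
    moreover then have "lam ! i \<le> lam ! 0" using part_mono[OF p, of 0 i] by simp
    ultimately show "j < (if lam = [] then 0 else hd lam) \<and> (i,j) \<in> cells lam"
      using hd0 \<open>(i,j) \<in> cells lam\<close> by auto
  qed simp
  finally show "q \<in> cells (conj_part lam) \<longleftrightarrow> q \<in> tr (cells lam)" using q by simp
qed

lemma odd_parts_conj: "is_partition lam \<Longrightarrow> odd_parts (conj_part lam) = ocol (cells lam)"
  unfolding odd_parts_orow ocol_def using cells_conj by simp

lemma card_odd_below: "card {j. j < m \<and> odd j} = m div 2"
proof (induction m)
  case 0 then show ?case by simp
next
  case (Suc m)
  show ?case
  proof (cases "odd m")
    case True
    then have "{j. j < Suc m \<and> odd j} = insert m {j. j < m \<and> odd j}" by auto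
    then show ?thesis using Suc True by (simp add: odd_pos)
  next
    case False
    then have "{j. j < Suc m \<and> odd j} = {j. j < m \<and> odd j}" using less_Suc_eq by auto
    then show ?thesis using Suc False by simp
  qed
qed

lemma dstat_dd: "dstat lam = dd (cells lam)"
proof -
  let ?A = "{i. i < length lam \<and> odd i}"
  have eq: "cells lam \<inter> {p. odd (fst p) \<and> odd (snd p)} = (SIGMA i:?A. {j. j < lam ! i \<and> odd j})"
    unfolding cells_def by auto
  have finA: "finite ?A" by simp
  have "dd (cells lam) = (\<Sum>i\<in>?A. card {j. j < lam ! i \<and> odd j})"
    unfolding dd_def eq using finA by (subst card_SigmaI) auto
  also have "\<dots> = (\<Sum>i\<in>?A. lam ! i div 2)" by (simp add: card_odd_below)
  also have "?A = (\<lambda>k. 2 * k - 1) ` {1..length lam div 2}"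
  proof
    show "?A \<subseteq> (\<lambda>k. 2 * k - 1) ` {1..length lam div 2}"
    proof
      fix i assume "i \<in> ?A"
      then have "i < length lam" "odd i" by auto
      then obtain k where "i = 2 * k + 1" by (meson oddE)
      then have "i = 2 * (k+1) - 1" "k + 1 \<in> {1..length lam div 2}" using \<open>i < length lam\<close> by auto
      then show "i \<in> (\<lambda>k. 2 * k - 1) ` {1..length lam div 2}" by blast
    qed
    show "(\<lambda>k. 2 * k - 1) ` {1..length lam div 2} \<subseteq> ?A"
    proof
      fix i assume "i \<in> (\<lambda>k. 2 * k - 1) ` {1..length lam div 2}"
      then obtain k where "i = 2 * k - 1" "1 \<le> k" "k \<le> length lam div 2" by auto
      then show "i \<in> ?A" by auto
    qed
  qed
  also have "(\<Sum>i\<in>(\<lambda>k. 2 * k - 1) ` {1..length lam div 2}. lam ! i div 2) = (\<Sum>k=1..length lam div 2. lam ! (2 * k - 1) div 2)"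
    by (rule sum.reindex_cong[where l = "\<lambda>k. 2 * k - 1"]) (auto simp: inj_on_def)
  finally show ?thesis unfolding dstat_def by simp
qed

lemma length_delta[simp]: "length (delta r) = r" unfolding delta_def by simp

lemma delta_nth: "i < r \<Longrightarrow> delta r ! i = r - i"
  unfolding delta_def by (subst rev_nth) (simp_all del: upt_Suc add: nth_upt)

lemma part_delta: "is_partition (delta r)"
  unfolding is_partition_def
proof
  show "sorted_wrt (\<ge>) (delta r)" unfolding sorted_wrt_iff_nth_less by (auto simp: delta_nth)
  show "0 \<notin> set (delta r)" unfolding delta_def by simp
qed

lemma cells_delta: "cells (delta r) = {(i,j). i + j < r}"
  unfolding cells_def by (auto simp: delta_nth)

lemma tr_delta: "tr (cells (delta r)) = cells (delta r)"
  unfolding cells_delta by auto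

lemma rowlen_delta: "rowlen (cells (delta r)) i = r - i"
  unfolding rowlen_cells by (simp add: delta_nth)

lemma downS_delta: "downS (cells (delta r)) = {}"
proof -
  let ?D = "cells (delta r)"
  have yD: "young ?D" using young_cells[OF part_delta] .
  have "RH ?D = {}" unfolding RH_def rowlen_delta by auto
  then have h: "downH ?D = {}" using downH_eq[OF yD] by simp
  then have "downV ?D = {}" unfolding downV_tr tr_delta by simp
  then show ?thesis using h downS_split by simp
qed

lemma no_dom_delta: "\<not> dom_step nu (delta r)"
  using downS_delta[of r] unfolding dom_step_iff downS_def by blast

lemma stepS_parity: assumes st: "stepS P S"
  shows "even (orow P + orow S) \<and> even (ocol P + ocol S)"
proof -
  have yP: "young P" using st unfolding stepS_def by auto
  have "is_domino (S - P)" using st unfolding stepS_def by auto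
  then consider "horizontal_domino (S - P)" | "vertical_domino (S - P)" unfolding is_domino_def by blast
  then show ?thesis
  proof cases
    case 1
    then obtain k where k: "k \<in> AH P" "S = addH P k" using step_hor[OF st] by blast
    have "orow S = orow P" using orow_addH[OF yP] k by simp
    moreover have "ocol S + (if odd k then 2 else 0) = ocol P + (if even k then 2 else 0)"
      using ocol_addH[OF yP k(1)] k(2) by simp
    then have "ocol S + 2 = ocol P \<or> ocol P + 2 = ocol S" by (cases "odd k") auto
    then have "even (ocol P + ocol S)" by presburger
    ultimately show ?thesis by simp
  next
    case 2
    have st': "stepS (tr P) (tr S)" using st stepS_tr by blast
    have h': "horizontal_domino (tr S - tr P)" using 2 hor_tr by (metis tr_diff)
    obtain k where k: "k \<in> AH (tr P)" "tr S = addH (tr P) k" using step_hor[OF st' h'] by blast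
    have yP': "young (tr P)" using yP by simp
    have "orow (tr S) = orow (tr P)" using orow_addH[OF yP'] k by simp
    moreover have "ocol (tr S) + (if odd k then 2 else 0) = ocol (tr P) + (if even k then 2 else 0)"
      using ocol_addH[OF yP' k(1)] k(2) by simp
    then have "ocol (tr S) + 2 = ocol (tr P) \<or> ocol (tr P) + 2 = ocol (tr S)" by (cases "odd k") auto
    then have "even (ocol (tr P) + ocol (tr S))" by presburger
    ultimately show ?thesis unfolding ocol_def by simp
  qed
qed

lemma reach_parity: assumes "dom_step\<^sup>*\<^sup>* mu lam"
  shows "even (orow (cells mu) + orow (cells lam)) \<and> even (ocol (cells mu) + ocol (cells lam))"
  using assms
proof (induction rule: rtranclp_induct)
  case base then show ?case by simp
next
  case (step lam nu)
  then have "stepS (cells lam) (cells nu)" using dom_step_iff by blast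
  from stepS_parity[OF this] step.IH show ?case by presburger
qed

definition sdtn where "sdtn r lam n = {T \<in> sdt r lam. length T = Suc n}"

lemma sdt_card: assumes T: "T \<in> sdt r lam"
  shows "k < length T \<Longrightarrow> is_partition (T ! k) \<and> card (cells (T ! k)) = card (cells (delta r)) + 2 * k"
proof (induction k)
  case 0
  have "T \<noteq> []" "hd T = delta r" using T unfolding sdt_def by auto
  then have "T ! 0 = delta r" by (simp add: hd_conv_nth[symmetric])
  then show ?case using part_delta by simp
next
  case (Suc k)
  then have "dom_step (T ! k) (T ! Suc k)" using T unfolding sdt_def by auto
  then have "is_partition (T ! Suc k)" "stepS (cells (T ! k)) (cells (T ! Suc k))" using dom_step_iff by auto
  then show ?case using Suc stepS_card by simp
qed

lemma sdt_length: assumes T: "T \<in> sdt r lam" and l: "lam \<in> P_set r n" shows "length T = Suc n"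
proof -
  have ne: "T \<noteq> []" and la: "last T = lam" using T unfolding sdt_def by auto
  have "T ! (length T - 1) = lam" using ne la by (simp add: last_conv_nth)
  then have "card (cells lam) = card (cells (delta r)) + 2 * (length T - 1)"
    using sdt_card[OF T, of "length T - 1"] ne by simp
  moreover have "card (cells lam) = card (cells (delta r)) + 2 * n"
    using l unfolding P_set_def by (simp add: card_cells)
  ultimately show ?thesis using ne by (cases T) auto
qed

lemma sdtn_0: "sdtn r lam 0 = (if lam = delta r then {[delta r]} else {})"
proof -
  have "T \<in> sdtn r lam 0 \<longleftrightarrow> lam = delta r \<and> T = [delta r]" for T
  proof
    assume "T \<in> sdtn r lam 0"
    then have "length T = 1" "hd T = delta r" "last T = lam" unfolding sdtn_def sdt_def by auto
    then show "lam = delta r \<and> T = [delta r]" by (cases T) auto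
  next
    assume "lam = delta r \<and> T = [delta r]"
    then show "T \<in> sdtn r lam 0" unfolding sdtn_def sdt_def by auto
  qed
  then show ?thesis by auto
qed

lemma sdtn_last: "T \<in> sdtn r mu n \<Longrightarrow> T \<noteq> [] \<and> last T = mu"
  unfolding sdtn_def sdt_def by auto

lemma sdtn_Suc: "sdtn r lam (Suc n) = (\<lambda>(mu,T). T @ [lam]) ` (SIGMA mu:{mu. dom_step mu lam}. sdtn r mu n)"
proof
  show "sdtn r lam (Suc n) \<subseteq> (\<lambda>(mu,T). T @ [lam]) ` (SIGMA mu:{mu. dom_step mu lam}. sdtn r mu n)"
  proof
    fix T assume T: "T \<in> sdtn r lam (Suc n)"
    then have ne: "T \<noteq> []" and hdT: "hd T = delta r" and la: "last T = lam" and len: "length T = Suc (Suc n)"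
      and st: "\<forall>k < length T - 1. dom_step (T ! k) (T ! Suc k)" unfolding sdtn_def sdt_def by auto
    let ?T' = "butlast T"
    have e: "T = ?T' @ [lam]" using ne la by (metis append_butlast_last_id)
    have len': "length ?T' = Suc n" using len by simp
    have ne': "?T' \<noteq> []"
    proof
      assume "?T' = []" then have "length ?T' = 0" by simp
      with len' show False by simp
    qed
    have nth': "k < length ?T' \<Longrightarrow> ?T' ! k = T ! k" for k by (simp add: nth_butlast)
    have "?T' ! 0 = T ! 0" using nth'[of 0] len' by simp
    then have hd': "hd ?T' = delta r" using hdT ne' ne by (simp add: hd_conv_nth)
    have st': "\<forall>k < length ?T' - 1. dom_step (?T' ! k) (?T' ! Suc k)"
      using st nth' len' by auto
    have "dom_step (T ! n) (T ! Suc n)" using st len by simp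
    moreover have "T ! n = last ?T'" using nth'[of n] len' ne' by (simp add: last_conv_nth)
    moreover have "T ! Suc n = lam" using la len ne by (simp add: last_conv_nth)
    ultimately have ds: "dom_step (last ?T') lam" by simp
    have "?T' \<in> sdtn r (last ?T') n" unfolding sdtn_def sdt_def using ne' hd' st' len' by auto
    then show "T \<in> (\<lambda>(mu,T). T @ [lam]) ` (SIGMA mu:{mu. dom_step mu lam}. sdtn r mu n)"
      using ds e by (intro image_eqI[of _ _ "(last ?T', ?T')"]) auto
  qed
next
  show "(\<lambda>(mu,T). T @ [lam]) ` (SIGMA mu:{mu. dom_step mu lam}. sdtn r mu n) \<subseteq> sdtn r lam (Suc n)"
  proof
    fix T2 assume "T2 \<in> (\<lambda>(mu,T). T @ [lam]) ` (SIGMA mu:{mu. dom_step mu lam}. sdtn r mu n)"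
    then obtain mu T where mu: "dom_step mu lam" and T: "T \<in> sdtn r mu n" and T2: "T2 = T @ [lam]" by auto
    have ne: "T \<noteq> []" and hdT: "hd T = delta r" and la: "last T = mu" and len: "length T = Suc n"
      and st: "\<forall>k < length T - 1. dom_step (T ! k) (T ! Suc k)" using T unfolding sdtn_def sdt_def by auto
    have st2: "\<forall>k < length T2 - 1. dom_step (T2 ! k) (T2 ! Suc k)"
    proof (intro allI impI)
      fix k assume k: "k < length T2 - 1"
      show "dom_step (T2 ! k) (T2 ! Suc k)"
      proof (cases "k < length T - 1")
        case True
        then have "Suc k < length T" by auto
        then show ?thesis using st True T2 by (simp add: nth_append)
      next
        case False
        then have "k = length T - 1" using k T2 by simp
        then have "T2 ! k = mu" "T2 ! Suc k = lam" using T2 la ne len by (simp_all add: nth_append last_conv_nth)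
        then show ?thesis using mu by simp
      qed
    qed
    show "T2 \<in> sdtn r lam (Suc n)" unfolding sdtn_def sdt_def using T2 st2 ne hdT len by auto
  qed
qed

lemma nv_snoc: assumes ne: "T \<noteq> []"
  shows "n_vertical (T @ [lam]) = n_vertical T + (if vertical_domino (cells lam - cells (last T)) then 1 else 0)"
proof -
  let ?P = "\<lambda>k. vertical_domino (cells ((T @ [lam]) ! Suc k) - cells ((T @ [lam]) ! k))"
  let ?Q = "\<lambda>k. vertical_domino (cells (T ! Suc k) - cells (T ! k))"
  let ?m = "length T - 1"
  have eq: "{k. k < length (T @ [lam]) - 1 \<and> ?P k} = {k. k < ?m \<and> ?Q k} \<union> (if vertical_domino (cells lam - cells (last T)) then {?m} else {})"
  proof -
    have a: "?P k = ?Q k" if "k < ?m" for k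
    proof -
      have "Suc k < length T" "k < length T" using that by auto
      then show ?thesis by (simp add: nth_append)
    qed
    have b: "?P ?m = vertical_domino (cells lam - cells (last T))"
      using ne by (simp add: nth_append last_conv_nth)
    have c: "length (T @ [lam]) - 1 = Suc ?m" using ne by simp
    show ?thesis
      unfolding c using a b by (auto simp: less_Suc_eq)
  qed
  show ?thesis unfolding n_vertical_def eq by (auto simp: card_insert_if)
qed

lemma downL_eq: assumes p: "is_partition lam"
  shows "{mu. dom_step mu lam} = to_list ` downS (cells lam)"
proof
  show "{mu. dom_step mu lam} \<subseteq> to_list ` downS (cells lam)"
  proof
    fix mu assume "mu \<in> {mu. dom_step mu lam}"
    then have "is_partition mu" "stepS (cells mu) (cells lam)" using dom_step_iff by auto
    then show "mu \<in> to_list ` downS (cells lam)"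
      unfolding downS_def using to_list_cells by (metis image_eqI mem_Collect_eq)
  qed
next
  show "to_list ` downS (cells lam) \<subseteq> {mu. dom_step mu lam}"
  proof
    fix mu assume "mu \<in> to_list ` downS (cells lam)"
    then obtain P where P: "stepS P (cells lam)" "mu = to_list P" unfolding downS_def by auto
    then have "young P" unfolding stepS_def by auto
    then show "mu \<in> {mu. dom_step mu lam}" using P to_list_props p dom_step_iff by auto
  qed
qed

lemma inj_to_list: "inj_on to_list (downS S)"
  unfolding inj_on_def downS_def stepS_def by (metis to_list_props(2) mem_Collect_eq)

lemma sdtn_sum: assumes p: "is_partition lam"
  shows "finite (sdtn r lam n) \<and> (\<Sum>T\<in>sdtn r lam n. s ^ n_vertical T) = fS (cells (delta r)) s n (cells lam)"
  using p
proof (induction n arbitrary: lam)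
  case 0
  show ?case
  proof (cases "lam = delta r")
    case True then show ?thesis by (simp add: sdtn_0 n_vertical_def)
  next
    case False
    then have "cells lam \<noteq> cells (delta r)" using cells_inj[OF 0 part_delta] by blast
    then show ?thesis using False by (simp add: sdtn_0)
  qed
next
  case (Suc n)
  let ?D = "{mu. dom_step mu lam}"
  let ?f = "\<lambda>(mu,T). T @ [lam]"
  have finD: "finite ?D" using downL_eq[OF Suc.prems] finite_downS_any by simp
  have pD: "mu \<in> ?D \<Longrightarrow> is_partition mu" for mu using dom_step_iff by auto
  have finS: "finite (SIGMA mu:?D. sdtn r mu n)" using finD Suc.IH pD by auto
  have inj: "inj_on ?f (SIGMA mu:?D. sdtn r mu n)"
  proof (rule inj_onI)
    fix a b assume a: "a \<in> (SIGMA mu:?D. sdtn r mu n)" and b: "b \<in> (SIGMA mu:?D. sdtn r mu n)" and e: "?f a = ?f b"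
    obtain mu1 T1 where a': "a = (mu1,T1)" by (cases a)
    obtain mu2 T2 where b': "b = (mu2,T2)" by (cases b)
    have "T1 = T2" using e a' b' by simp
    moreover have "last T1 = mu1" "last T2 = mu2" using a b a' b' sdtn_last by auto
    ultimately show "a = b" using a' b' by simp
  qed
  have "(\<Sum>T\<in>sdtn r lam (Suc n). s ^ n_vertical T) = (\<Sum>x\<in>(SIGMA mu:?D. sdtn r mu n). s ^ n_vertical (?f x))"
    unfolding sdtn_Suc using sum.reindex[OF inj, of "\<lambda>T. s ^ n_vertical T"] by (simp add: comp_def)
  also have "\<dots> = (\<Sum>(mu,T)\<in>(SIGMA mu:?D. sdtn r mu n). s ^ n_vertical (T @ [lam]))"
    by (rule sum.cong) auto
  also have "\<dots> = (\<Sum>mu\<in>?D. \<Sum>T\<in>sdtn r mu n. s ^ n_vertical (T @ [lam]))"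
    using finD Suc.IH pD by (subst sum.Sigma) auto
  also have "\<dots> = (\<Sum>mu\<in>?D. sv s (cells mu) (cells lam) * (\<Sum>T\<in>sdtn r mu n. s ^ n_vertical T))"
  proof (rule sum.cong[OF refl])
    fix mu assume "mu \<in> ?D"
    have "\<And>T. T \<in> sdtn r mu n \<Longrightarrow> s ^ n_vertical (T @ [lam]) = sv s (cells mu) (cells lam) * s ^ n_vertical T"
      using sdtn_last nv_snoc unfolding sv_def by (auto simp: power_add)
    then show "(\<Sum>T\<in>sdtn r mu n. s ^ n_vertical (T @ [lam])) = sv s (cells mu) (cells lam) * (\<Sum>T\<in>sdtn r mu n. s ^ n_vertical T)"
      by (simp add: sum_distrib_left)
  qed
  also have "\<dots> = (\<Sum>mu\<in>?D. sv s (cells mu) (cells lam) * fS (cells (delta r)) s n (cells mu))"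
    using Suc.IH pD by simp
  also have "\<dots> = (\<Sum>P\<in>downS (cells lam). sv s (cells (to_list P)) (cells lam) * fS (cells (delta r)) s n (cells (to_list P)))"
    unfolding downL_eq[OF Suc.prems]
    using sum.reindex[OF inj_to_list[of "cells lam"], of "\<lambda>mu. sv s (cells mu) (cells lam) * fS (cells (delta r)) s n (cells mu)"]
    by (simp add: comp_def)
  also have "\<dots> = (\<Sum>P\<in>downS (cells lam). sv s P (cells lam) * fS (cells (delta r)) s n P)"
    by (rule sum.cong[OF refl]) (auto simp: downS_def stepS_def to_list_props(2))
  also have "\<dots> = fS (cells (delta r)) s (Suc n) (cells lam)" by simp
  finally show ?case using finS inj sdtn_Suc by (simp add: finite_image_iff)
qed

lemma dpoly_eq: assumes l: "lam \<in> P_set r n"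
  shows "dpoly s r lam = fS (cells (delta r)) s n (cells lam)"
proof -
  have p: "is_partition lam" using l unfolding P_set_def by auto
  have "sdt r lam = sdtn r lam n" unfolding sdtn_def using sdt_length[OF _ l] by auto
  then show ?thesis unfolding dpoly_def using sdtn_sum[OF p] by simp
qed

lemma powi_half:
  fixes x :: complex
  assumes x: "x \<noteq> 0" and e: "even (m + k)"
  shows "(x^2) powi ((int m - int k) div 2) = x ^ m / x ^ k"
proof -
  have ev: "2 * ((int m - int k) div 2) = int m - int k" using e by presburger
  have "(x^2) powi ((int m - int k) div 2) = (x powi 2) powi ((int m - int k) div 2)" by simp
  also have "\<dots> = x powi (2 * ((int m - int k) div 2))" by (rule power_int_mult[symmetric])
  also have "\<dots> = x powi (int m - int k)" using ev by simp
  also have "\<dots> = x powi int m / x powi int k" using x by (rule power_int_diff[OF disjI1])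
  finally show ?thesis by simp
qed

lemma fS_reach: "fS (cells (delta r)) s n S \<noteq> 0 \<Longrightarrow> young S \<and> dom_step\<^sup>*\<^sup>* (delta r) (to_list S)"
proof (induction n arbitrary: S)
  case 0
  then have "S = cells (delta r)" by (simp split: if_splits)
  then show ?case using young_cells[OF part_delta] to_list_cells[OF part_delta] by simp
next
  case (Suc n)
  then obtain P where P: "P \<in> downS S" "sv s P S * fS (cells (delta r)) s n P \<noteq> 0"
    by (metis (no_types, lifting) fS.simps(2) sum.neutral)
  then have "fS (cells (delta r)) s n P \<noteq> 0" by auto
  then have ih: "dom_step\<^sup>*\<^sup>* (delta r) (to_list P)" using Suc.IH by blast
  have st: "stepS P S" using P unfolding downS_def by auto
  then have yy: "young P" "young S" unfolding stepS_def by auto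
  have "dom_step (to_list P) (to_list S)"
    unfolding dom_step_iff using to_list_props[OF yy(1)] to_list_props[OF yy(2)] st by simp
  then show ?case using ih yy by auto
qed

lemma cells_P_set: assumes "lam \<in> P_set r n" shows "cells lam \<in> YS (card (cells (delta r)) + 2 * n)"
  using assms young_cells unfolding P_set_def YS_def by (auto simp: card_cells)

lemma YS_P_set: assumes S: "S \<in> YS (card (cells (delta r)) + 2 * n)" and nz: "fS (cells (delta r)) s n S \<noteq> 0"
  shows "S \<in> cells ` P_set r n"
proof -
  have y: "young S" and r: "dom_step\<^sup>*\<^sup>* (delta r) (to_list S)" using fS_reach[OF nz] by auto
  let ?l = "to_list S"
  have p: "is_partition ?l" and c: "cells ?l = S" using to_list_props[OF y] by auto
  have "sum_list ?l = sum_list (delta r) + 2 * n"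
    using S c card_cells[of ?l] card_cells[of "delta r"] unfolding YS_def by simp
  then have "?l \<in> P_set r n" unfolding P_set_def has_two_core_def using p r no_dom_delta by blast
  then show ?thesis using c by blast
qed

lemma weight_eq:
  fixes a b c s :: complex
  assumes ab: "a = x^2" "b = y^2" and nz: "x \<noteq> 0" "y \<noteq> 0" "c \<noteq> 0" and l: "lam \<in> P_set r n"
  shows "a powi ((int (odd_parts lam) - int (odd_parts (delta r))) div 2) *
      b powi ((int (odd_parts (conj_part lam)) - int (odd_parts (delta r))) div 2) *
      c powi (int (dstat lam) - int (dstat (delta r))) = wt x y c (cells lam) / wt x y c (cells (delta r))"
proof -
  let ?D = "cells (delta r)" and ?C = "cells lam"
  have p: "is_partition lam" and rr: "dom_step\<^sup>*\<^sup>* (delta r) lam" using l unfolding P_set_def has_two_core_def by auto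
  have par: "even (orow ?D + orow ?C)" "even (ocol ?D + ocol ?C)" using reach_parity[OF rr] by auto
  have oc: "ocol ?D = orow ?D" unfolding ocol_def tr_delta ..
  have e1: "a powi ((int (odd_parts lam) - int (odd_parts (delta r))) div 2) = x ^ orow ?C / x ^ orow ?D"
    unfolding ab odd_parts_orow by (rule powi_half[OF nz(1)]) (use par in presburger)
  have e2: "b powi ((int (odd_parts (conj_part lam)) - int (odd_parts (delta r))) div 2) = y ^ ocol ?C / y ^ orow ?D"
    unfolding ab odd_parts_conj[OF p] unfolding odd_parts_orow by (rule powi_half[OF nz(2)]) (use par oc in presburger)
  have e3: "c powi (int (dstat lam) - int (dstat (delta r))) = c ^ dd ?C / c ^ dd ?D"
    unfolding dstat_dd using power_int_diff[of c "int (dd ?C)" "int (dd ?D)"] nz(3) by simp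
  show ?thesis unfolding e1 e2 e3 wt_def oc by simp
qed

lemma hfun_HS:
  fixes a b c s :: complex
  assumes ab: "a = x^2" "b = y^2" and nz: "x \<noteq> 0" "y \<noteq> 0" "c \<noteq> 0"
  shows "hfun a b c s r n = HS (cells (delta r)) x y c s n / wt x y c (cells (delta r))"
proof -
  let ?D = "cells (delta r)" and ?N = "card (cells (delta r)) + 2 * n"
  let ?g = "\<lambda>S. wt x y c S * fS ?D s n S"
  have "hfun a b c s r n = (\<Sum>lam\<in>P_set r n. ?g (cells lam) / wt x y c ?D)"
    unfolding hfun_def
    by (rule sum.cong[OF refl]) (simp add: weight_eq[OF ab nz] dpoly_eq)
  also have "\<dots> = (\<Sum>lam\<in>P_set r n. ?g (cells lam)) / wt x y c ?D"
    by (simp add: sum_divide_distrib)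
  also have "(\<Sum>lam\<in>P_set r n. ?g (cells lam)) = (\<Sum>S\<in>cells ` P_set r n. ?g S)"
  proof -
    have "inj_on cells (P_set r n)" unfolding inj_on_def P_set_def using cells_inj by blast
    then show ?thesis by (simp add: sum.reindex)
  qed
  also have "\<dots> = (\<Sum>S\<in>YS ?N. ?g S)"
  proof (rule sum.mono_neutral_left[OF finite_YS])
    show "cells ` P_set r n \<subseteq> YS ?N" using cells_P_set by blast
    show "\<forall>S\<in>YS ?N - cells ` P_set r n. ?g S = 0" using YS_P_set by fastforce
  qed
  finally show ?thesis unfolding HS_def by simp
qed

fun hh :: "complex \<Rightarrow> complex \<Rightarrow> nat \<Rightarrow> complex" where
  "hh X Y 0 = 1"
| "hh X Y (Suc 0) = X"
| "hh X Y (Suc (Suc n)) = X * hh X Y (Suc n) + of_nat (Suc n) * Y * hh X Y n"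

definition EA :: "complex \<Rightarrow> nat \<Rightarrow> complex" where "EA X i = X ^ i / fact i"
definition EE :: "complex \<Rightarrow> nat \<Rightarrow> complex" where
  "EE Y m = (if even m then (Y / 2) ^ (m div 2) / fact (m div 2) else 0)"
definition PP where "PP X Y n = (\<Sum>i\<le>n. EA X i * EE Y (n - i))"

lemma fact_Suc_c: "(fact (Suc i) :: complex) = of_nat (Suc i) * fact i"
  by (rule fact_Suc)

lemma EA_Suc: "of_nat (Suc i) * EA X (Suc i) = X * EA X i"
proof -
  have nz: "(of_nat (Suc i) :: complex) \<noteq> 0" by (simp only: of_nat_eq_0_iff)
  have "EA X (Suc i) = (X * X ^ i) / (of_nat (Suc i) * fact i)" unfolding EA_def fact_Suc_c by simp
  then show ?thesis unfolding EA_def using nz by simp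
qed

lemma EE_step: "(of_nat (2 * Suc p) :: complex) * ((Y/2)^(Suc p) / fact (Suc p)) = Y * ((Y/2)^p / fact p)"
proof -
  have nz: "(1 + of_nat p :: complex) \<noteq> 0" by (metis of_nat_Suc of_nat_eq_0_iff Suc_neq_Zero)
  have e: "(2 + of_nat p * 2 :: complex) = of_nat (Suc (Suc (p*2)))" by simp
  have nz2: "(2 + of_nat p * 2 :: complex) \<noteq> 0" unfolding e by (simp only: of_nat_eq_0_iff Suc_neq_Zero not_False_eq_True)
  show ?thesis unfolding fact_Suc_c power_Suc using nz nz2 by (simp add: divide_simps) (simp add: algebra_simps)
qed

lemma EE_mult: "of_nat m * EE Y m = (if 2 \<le> m then Y * EE Y (m - 2) else 0)"
proof (cases "2 \<le> m")
  case True
  show ?thesis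
  proof (cases "even m")
    case ev: True
    then obtain q where q: "m = 2 * q" by blast
    then have q1: "q \<ge> 1" using True by simp
    then obtain p where p: "q = Suc p" by (cases q) auto
    have "m - 2 = 2 * p" using q p by simp
    then have e2: "EE Y (m - 2) = (Y/2)^p / fact p" unfolding EE_def by simp
    have e1: "EE Y m = (Y/2)^(Suc p) / fact (Suc p)" unfolding EE_def using q p by simp
    have "of_nat m * EE Y m = Y * EE Y (m - 2)" unfolding e1 e2 using EE_step[of p Y] q p by simp
    then show ?thesis using True by simp
  next
    case False
    then have "odd (m - 2)" using True by (metis add_diff_inverse_nat even_add not_le odd_one even_numeral)
    then show ?thesis using False True unfolding EE_def by simp
  qed
next
  case False
  then have "m = 0 \<or> m = 1" by auto
  then show ?thesis using False unfolding EE_def by auto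
qed

lemma PP_0: "PP X Y 0 = 1" unfolding PP_def EA_def EE_def by simp
lemma PP_1: "PP X Y 1 = X" unfolding PP_def EA_def EE_def by simp

lemma PP_rec: "of_nat (Suc n) * PP X Y (Suc n) = X * PP X Y n + (if n = 0 then 0 else Y * PP X Y (n - 1))"
proof -
  have split: "of_nat (Suc n) * PP X Y (Suc n) =
      (\<Sum>i\<le>Suc n. of_nat i * (EA X i * EE Y (Suc n - i))) + (\<Sum>i\<le>Suc n. of_nat (Suc n - i) * (EA X i * EE Y (Suc n - i)))"
  proof -
    have "of_nat (Suc n) * PP X Y (Suc n) = (\<Sum>i\<le>Suc n. (of_nat i + of_nat (Suc n - i)) * (EA X i * EE Y (Suc n - i)))"
      unfolding PP_def sum_distrib_left
    proof (rule sum.cong[OF refl])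
      fix i assume "i \<in> {..Suc n}"
      then have "of_nat (Suc n) = (of_nat i + of_nat (Suc n - i) :: complex)" by (simp add: of_nat_diff)
      then show "of_nat (Suc n) * (EA X i * EE Y (Suc n - i)) = (of_nat i + of_nat (Suc n - i)) * (EA X i * EE Y (Suc n - i))"
        by simp
    qed
    also have "\<dots> = (\<Sum>i\<le>Suc n. of_nat i * (EA X i * EE Y (Suc n - i)) + of_nat (Suc n - i) * (EA X i * EE Y (Suc n - i)))"
      by (rule sum.cong[OF refl]) (simp only: distrib_right)
    finally show ?thesis by (simp only: sum.distrib)
  qed
  have p1: "(\<Sum>i\<le>Suc n. of_nat i * (EA X i * EE Y (Suc n - i))) = X * PP X Y n"
  proof -
    have "(\<Sum>i\<le>Suc n. of_nat i * (EA X i * EE Y (Suc n - i))) =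
        0 + (\<Sum>i\<le>n. (of_nat (Suc i) * EA X (Suc i)) * EE Y (Suc n - Suc i))"
      by (subst sum.atMost_Suc_shift) (simp add: mult.assoc)
    also have "\<dots> = (\<Sum>i\<le>n. X * (EA X i * EE Y (n - i)))"
      by (simp only: EA_Suc diff_Suc_Suc) (simp add: mult.assoc)
    finally show ?thesis unfolding PP_def by (simp add: sum_distrib_left)
  qed
  have p2: "(\<Sum>i\<le>Suc n. of_nat (Suc n - i) * (EA X i * EE Y (Suc n - i))) = (if n = 0 then 0 else Y * PP X Y (n - 1))"
  proof (cases n)
    case 0
    then show ?thesis by (simp add: EE_mult EE_def)
  next
    case (Suc k)
    have "(\<Sum>i\<le>Suc n. of_nat (Suc n - i) * (EA X i * EE Y (Suc n - i))) =
        (\<Sum>i\<le>Suc (Suc k). of_nat (Suc (Suc k) - i) * (EA X i * EE Y (Suc (Suc k) - i)))"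
      using Suc by simp
    also have "\<dots> = (\<Sum>i\<le>k. of_nat (Suc (Suc k) - i) * (EA X i * EE Y (Suc (Suc k) - i)))
        + of_nat 1 * (EA X (Suc k) * EE Y 1) + of_nat 0 * (EA X (Suc (Suc k)) * EE Y 0)"
      by (simp only: sum.atMost_Suc diff_Suc_Suc diff_self_eq_0 Suc_diff_le le_refl) simp
    also have "\<dots> = (\<Sum>i\<le>k. of_nat (Suc (Suc k) - i) * (EA X i * EE Y (Suc (Suc k) - i)))"
      by (simp add: EE_def)
    also have "\<dots> = (\<Sum>i\<le>k. Y * (EA X i * EE Y (k - i)))"
    proof (rule sum.cong[OF refl])
      fix i assume "i \<in> {..k}"
      then have i: "2 \<le> Suc (Suc k) - i" "Suc (Suc k) - i - 2 = k - i" by auto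
      have "of_nat (Suc (Suc k) - i) * EE Y (Suc (Suc k) - i) = Y * EE Y (k - i)"
        using EE_mult[of "Suc (Suc k) - i" Y] i by simp
      then show "of_nat (Suc (Suc k) - i) * (EA X i * EE Y (Suc (Suc k) - i)) = Y * (EA X i * EE Y (k - i))"
        by (metis mult.left_commute)
    qed
    finally show ?thesis using Suc unfolding PP_def by (simp add: sum_distrib_left)
  qed
  show ?thesis using split p1 p2 by simp
qed

lemma hh_PP: "hh X Y n = fact n * PP X Y n"
proof (induction X Y n rule: hh.induct)
  case (1 X Y) then show ?case by (simp add: PP_0)
next
  case (2 X Y) then show ?case using PP_1[of X Y] by simp
next
  case (3 X Y n)
  have "fact (Suc (Suc n)) * PP X Y (Suc (Suc n)) = fact (Suc n) * (of_nat (Suc (Suc n)) * PP X Y (Suc (Suc n)))"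
    by (simp add: algebra_simps)
  also have "\<dots> = fact (Suc n) * (X * PP X Y (Suc n) + Y * PP X Y n)"
    using PP_rec[of "Suc n" X Y] by simp
  also have "\<dots> = X * (fact (Suc n) * PP X Y (Suc n)) + of_nat (Suc n) * Y * (fact n * PP X Y n)"
    by (simp add: algebra_simps)
  finally show ?case using 3 by simp
qed

lemma exp_sums_c: "(\<lambda>n. z ^ n / fact n) sums exp (z::complex)"
  using exp_converges[of z] by (simp add: scaleR_conv_of_real divide_inverse mult.commute)

lemma exp_sums_r: "(\<lambda>n. r ^ n / fact n) sums exp (r::real)"
  using exp_converges[of r] by (simp add: divide_inverse mult.commute)

lemma even_sums:
  assumes "(\<lambda>k. f k) sums L"
  shows "(\<lambda>m. if even m then f (m div 2) else 0) sums L"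
proof -
  have sm: "strict_mono (\<lambda>k::nat. 2 * k)" by (rule strict_monoI) simp
  have z: "\<And>m. m \<notin> range (\<lambda>k::nat. 2 * k) \<Longrightarrow> (if even m then f (m div 2) else 0) = 0" by auto
  have "(\<lambda>k. (\<lambda>m. if even m then f (m div 2) else 0) (2 * k)) sums L" using assms by simp
  then show ?thesis using sums_mono_reindex[of "\<lambda>k. 2 * k" "\<lambda>m. if even m then f (m div 2) else 0", OF sm z] by blast
qed

lemma egf: "(\<lambda>n. hh X Y n * t ^ n / fact n) sums exp (X * t + Y * t\<^sup>2 / 2)"
proof -
  define a where "a i = (X * t) ^ i / fact i" for i
  define b where "b m = (if even m then (Y * t\<^sup>2 / 2) ^ (m div 2) / fact (m div 2) else 0)" for m
  have sa: "a sums exp (X * t)" unfolding a_def by (rule exp_sums_c)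
  have sb: "b sums exp (Y * t\<^sup>2 / 2)" unfolding b_def by (rule even_sums[OF exp_sums_c])
  have na: "summable (\<lambda>k. norm (a k))"
  proof -
    have "(\<lambda>k. norm (a k)) = (\<lambda>k. norm (X * t) ^ k / fact k)"
      unfolding a_def by (simp add: norm_divide norm_power)
    then show ?thesis using exp_sums_r summable_def by metis
  qed
  have nb: "summable (\<lambda>k. norm (b k))"
  proof -
    have "(\<lambda>k. norm (b k)) = (\<lambda>m. if even m then norm (Y * t\<^sup>2 / 2) ^ (m div 2) / fact (m div 2) else 0)"
      unfolding b_def by (auto simp: norm_divide norm_power)
    then show ?thesis using even_sums[OF exp_sums_r] summable_def by metis
  qed
  have c: "(\<lambda>k. \<Sum>i\<le>k. a i * b (k - i)) sums (exp (X * t) * exp (Y * t\<^sup>2 / 2))"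
    using Cauchy_product_sums[OF na nb] sums_unique[OF sa] sums_unique[OF sb] by simp
  have eq: "(\<Sum>i\<le>k. a i * b (k - i)) = hh X Y k * t ^ k / fact k" for k
  proof -
    have "a i * b (k - i) = t ^ k * (EA X i * EE Y (k - i))" if "i \<le> k" for i
    proof -
      have tk: "t ^ k = t ^ i * t ^ (k - i)" using that by (simp flip: power_add)
      show ?thesis
      proof (cases "even (k - i)")
        case True
        then have "t ^ (k - i) = (t\<^sup>2) ^ ((k - i) div 2)"
          by (metis dvd_mult_div_cancel power_mult)
        then show ?thesis unfolding a_def b_def EA_def EE_def tk using True
          by (simp add: power_mult_distrib field_simps)
      next
        case False
        then show ?thesis unfolding a_def b_def EA_def EE_def by simp
      qed
    qed
    then have "(\<Sum>i\<le>k. a i * b (k - i)) = t ^ k * PP X Y k" unfolding PP_def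
      by (simp add: sum_distrib_left)
    then show ?thesis using hh_PP[of X Y k] by simp
  qed
  show ?thesis using c unfolding eq by (simp add: exp_add)
qed

lemma hfun_hh:
  fixes a b c s :: complex
  assumes nz: "a \<noteq> 0" "b \<noteq> 0" "c \<noteq> 0"
  shows "hfun a b c s r n = hh (b + a * s) (c * (1 + s\<^sup>2)) n"
proof -
  define x where "x = csqrt a"
  define y where "y = csqrt b"
  have ab: "a = x^2" "b = y^2" unfolding x_def y_def by simp_all
  have xy: "x \<noteq> 0" "y \<noteq> 0" using nz ab by auto
  let ?D = "cells (delta r)"
  let ?X = "b + a * s" and ?Y = "c * (1 + s\<^sup>2)"
  have yD: "young ?D" using young_cells[OF part_delta] .
  have dD: "downS ?D = {}" by (rule downS_delta)
  define w where "w = wt x y c ?D"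
  have w0: "w \<noteq> 0" unfolding w_def wt_def using xy nz by simp
  have hf: "hfun a b c s r m = HS ?D x y c s m / w" for m
    unfolding w_def by (rule hfun_HS[OF ab xy nz(3)])
  have XX: "y^2 + x^2 * s = ?X" using ab by simp
  have H0: "HS ?D x y c s 0 = w" unfolding w_def by (rule HS_0[OF yD])
  have H1: "HS ?D x y c s (Suc 0) = ?X * w"
    using HS_Suc[of ?D x y c s 0] T2_0[OF yD dD] H0 XX by simp
  have H2: "HS ?D x y c s (Suc (Suc m)) = ?X * HS ?D x y c s (Suc m) + of_nat (Suc m) * ?Y * HS ?D x y c s m" for m
    using HS_Suc[of ?D x y c s "Suc m"] unfolding T2_Suc[OF dD] XX by (simp add: mult_ac)
  have "HS ?D x y c s m / w = hh ?X ?Y m \<and> HS ?D x y c s (Suc m) / w = hh ?X ?Y (Suc m)" for m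
  proof (induction m)
    case 0 then show ?case using H0 H1 w0 by simp
  next
    case (Suc m)
    have "HS ?D x y c s (Suc (Suc m)) / w = ?X * (HS ?D x y c s (Suc m) / w) + of_nat (Suc m) * ?Y * (HS ?D x y c s m / w)"
      unfolding H2 by (simp only: add_divide_distrib times_divide_eq_right)
    then show ?case using Suc by simp
  qed
  then show ?thesis using hf by simp
qed

theorem proposition3p14:
  fixes a b c s :: complex
  assumes "a \<noteq> 0" "b \<noteq> 0" "c \<noteq> 0" "s \<noteq> 0"
  shows "(\<forall>r n. hfun a b c s r n = hfun a b c s 0 n) \<and>
         (\<forall>r. hfun a b c s r 0 = 1) \<and>
         (\<forall>r. hfun a b c s r 1 = b + a * s) \<and>
         (\<forall>r n. n \<ge> 1 \<longrightarrow> hfun a b c s r (n + 1) =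
              (b + a * s) * hfun a b c s r n + of_nat n * c * (1 + s\<^sup>2) * hfun a b c s r (n - 1)) \<and>
         (\<forall>r t. (\<lambda>n. hfun a b c s r n * t ^ n / fact n) sums
              exp ((b + a * s) * t + c * (1 + s\<^sup>2) * t\<^sup>2 / 2))"
proof -
  have h: "\<And>r n. hfun a b c s r n = hh (b + a * s) (c * (1 + s\<^sup>2)) n"
    using hfun_hh assms by blast
  have rec: "hfun a b c s r (n + 1) =
              (b + a * s) * hfun a b c s r n + of_nat n * c * (1 + s\<^sup>2) * hfun a b c s r (n - 1)"
    if "n \<ge> 1" for r n
  proof -
    define m where "m = n - 1"
    have m: "n = Suc m" using that unfolding m_def by simp
    show ?thesis unfolding h m by (simp add: mult.assoc)
  qed
  show ?thesis using h rec egf by simp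
qed

end
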